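(* Let $n\ge 2$, $c=s_{n-1}s_{n-2}\cdots s_1\in S_n$ and $h\in[n-1]$. Then none of the Plücker relations $R^k_{J,L}$ degenerates to a monomial in $\operatorname{in}_{\mathbf w}(\mathcal I_{cs_h})$.
   Context: Notation: $[a,b]=\{a,\dots,b\}$, $[b]=[1,b]$. $S_n$ is the symmetric group with simple reflections $s_i=(i,i+1)$. For $v\in S_n$, $v([k])=\{v(1),\dots,v(k)\}$; for $k$-subsets $I=\{a_1<\dots<a_k\}$, $K=\{b_1<\dots<b_k\}$ of $[n]$, $I\le K$ iff $a_r\le b_r$ for all $r$. $A_n=\mathbb C[p_I:I\subseteq[n],1\le|I|\le n-1]$; for a sequence of distinct elements, $p$ of the sequence is the signed coordinate of the underlying set (sign of the sorting permutation), and $0$ for sequences with repeats. Plücker relations: for sequences $J=(j_1,\dots,j_e)$, $L=(l_1,\dots,l_d)$ of distinct elements of $[n]$ with $1\le e\le d\le n-1$ and $k\in[e]$, $R^k_{J,L}=p_Jp_L-\sum_{1\le r_1<\dots<r_k\le d}p_{J'}p_{L'}$, with $J'$ obtained from $J$ by replacing $j_t$ by $l_{r_t}$ and $L'$ from $L$ by replacing $l_{r_t}$ by $j_t$ ($t=1,\dots,k$). $\mathcal I_{\mathrm{Fl}_n}$ is generated by all $R^k_{J,L}$, and $\mathcal I_v=\mathcal I_{\mathrm{Fl}_n}+(p_I:I\not\le v([|I|]))$. Weight $\mathbf w_I=\#\{a\in I:|I|\le a\le n-1\}$; $\operatorname{in}_{\mathbf w}(f)$ is the sum of the terms of $f$ of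 minimal weight (weight of $\prod p_I^{\alpha_I}$ is $\sum\alpha_I\mathbf w_I$); $\operatorname{in}_{\mathbf w}(\mathcal I)$ is generated by the $\operatorname{in}_{\mathbf w}(f)$, $f\in\mathcal I$. A Plücker relation $R^k_{J,L}$ degenerates to a monomial in $\operatorname{in}_{\mathbf w}(\mathcal I_v)$ if the image of $\operatorname{in}_{\mathbf w}(R^k_{J,L})$ in the quotient ring $A_n/(p_I:I\not\le v([|I|]))$ is a nonzero scalar multiple of a single monomial. *)

theory Defs
  imports "HOL-Combinatorics.Transposition" "HOL-Library.Multiset"
begin

definition sref :: "nat \<Rightarrow> nat \<Rightarrow> nat" where
  "sref i = Transposition.transpose i (Suc i)"

definition cox :: "nat \<Rightarrow> nat \<Rightarrow> nat" where
  "cox n = foldr (\<circ>) (map sref (rev [1..<n])) id"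

text \<open>Monomials in the Pluecker variables p_I: multisets of index sets I.
  Polynomials: coefficient functions from monomials to integers.\<close>
type_synonym mono = "nat set multiset"
type_synonym poly = "mono \<Rightarrow> int"

text \<open>Number of inversions of a sequence; its parity is the sign of the sorting permutation.\<close>
definition inversions :: "nat list \<Rightarrow> nat" where
  "inversions xs = card {(i, j). i < j \<and> j < length xs \<and> xs ! j < xs ! i}"

text \<open>Sign attached to p of a sequence: sign of sorting permutation, 0 if repeated entries.\<close>
definition psgn :: "nat list \<Rightarrow> int" where
  "psgn xs = (if distinct xs then (-1) ^ inversions xs else 0)"

definition plterm :: "nat list \<Rightarrow> nat list \<Rightarrow> poly" where
  "plterm J L = (\<lambda>m. if m = {# set J, set L #} then psgn J * psgn L else 0)"

text \<open>J' and L' for the index set S = {r_1 < ... < r_k} (0-based positions in L).\<close>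
definition Jrep :: "nat list \<Rightarrow> nat list \<Rightarrow> nat set \<Rightarrow> nat list" where
  "Jrep J L S = map (\<lambda>t. if t < card S then L ! (sorted_list_of_set S ! t) else J ! t) [0..<length J]"

definition Lrep :: "nat list \<Rightarrow> nat list \<Rightarrow> nat set \<Rightarrow> nat list" where
  "Lrep J L S = map (\<lambda>i. if i \<in> S then J ! card {x \<in> S. x < i} else L ! i) [0..<length L]"

definition plucker_rel :: "nat list \<Rightarrow> nat list \<Rightarrow> nat \<Rightarrow> poly" where
  "plucker_rel J L k = (\<lambda>m. plterm J L m
      - (\<Sum>S \<in> {S. S \<subseteq> {0..<length L} \<and> card S = k}. plterm (Jrep J L S) (Lrep J L S) m))"

definition wI :: "nat \<Rightarrow> nat set \<Rightarrow> nat" where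
  "wI n I = card {a \<in> I. card I \<le> a \<and> a \<le> n - 1}"

definition wmono :: "nat \<Rightarrow> mono \<Rightarrow> nat" where
  "wmono n m = sum_mset (image_mset (wI n) m)"

definition in_w :: "nat \<Rightarrow> poly \<Rightarrow> poly" where
  "in_w n f = (\<lambda>m. if f m \<noteq> 0 \<and> (\<forall>m'. f m' \<noteq> 0 \<longrightarrow> wmono n m \<le> wmono n m') then f m else 0)"

definition gale_le :: "nat set \<Rightarrow> nat set \<Rightarrow> bool" where
  "gale_le I K = (card I = card K \<and>
     (\<forall>r < card I. sorted_list_of_set I ! r \<le> sorted_list_of_set K ! r))"

text \<open>Image in A_n / (p_I : I not <= v([|I|])): kill monomials containing such a variable.\<close>
definition quot_v :: "(nat \<Rightarrow> nat) \<Rightarrow> poly \<Rightarrow> poly" where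
  "quot_v v f = (\<lambda>m. if (\<forall>I \<in># m. gale_le I (v ` {1..card I})) then f m else 0)"

definition degenerates_to_monomial :: "nat \<Rightarrow> (nat \<Rightarrow> nat) \<Rightarrow> poly \<Rightarrow> bool" where
  "degenerates_to_monomial n v f = (\<exists>!m. quot_v v (in_w n f) m \<noteq> 0)"

end

theory Submission
  imports Defs
begin


definition sg :: "nat \<Rightarrow> nat \<Rightarrow> int" where
  "sg a b = (if b < a then -1 else 1)"

definition prs :: "nat list \<Rightarrow> int" where
  "prs xs = (\<Prod>(i,j)\<in>{(i,j). i < j \<and> j < length xs}. sg (xs!i) (xs!j))"

lemma prod_pm1: "finite A \<Longrightarrow> (\<Prod>x\<in>A. if P x then -1 else (1::int)) = (-1) ^ card {x\<in>A. P x}"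
proof -
  assume f: "finite A"
  have "(\<Prod>x\<in>A. if P x then -1 else (1::int)) = (\<Prod>x\<in>A \<inter> {x. P x}. -1) * (\<Prod>x\<in>A \<inter> - {x. P x}. 1)"
    by (rule prod.If_cases[OF f])
  also have "\<dots> = (-1) ^ card (A \<inter> {x. P x})" by simp
  also have "A \<inter> {x. P x} = {x\<in>A. P x}" by auto
  finally show ?thesis .
qed

lemma psgn_prs: "distinct xs \<Longrightarrow> psgn xs = prs xs"
proof -
  assume "distinct xs"
  let ?A = "{(i,j). i < j \<and> j < length xs}"
  have fin: "finite ?A" by (rule finite_subset[of _ "{0..<length xs} \<times> {0..<length xs}"]) auto
  have "prs xs = (\<Prod>p\<in>?A. if (xs!snd p) < (xs!fst p) then -1 else 1)"
    unfolding prs_def sg_def by (rule prod.cong) auto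
  also have "\<dots> = (-1) ^ card {p\<in>?A. (xs!snd p) < (xs!fst p)}" by (rule prod_pm1[OF fin])
  also have "{p\<in>?A. (xs!snd p) < (xs!fst p)} = {(i, j). i < j \<and> j < length xs \<and> xs ! j < xs ! i}" by auto
  finally show ?thesis using \<open>distinct xs\<close> unfolding psgn_def inversions_def by simp
qed


definition subl :: "nat list \<Rightarrow> nat set \<Rightarrow> nat list" where
  "subl zs S = map (\<lambda>t. zs ! (sorted_list_of_set S ! t)) [0..<card S]"

lemma ss_len: "finite S \<Longrightarrow> length (sorted_list_of_set S) = card S" by simp
lemma ss_less: "finite S \<Longrightarrow> a < b \<Longrightarrow> b < card S \<Longrightarrow> sorted_list_of_set S ! a < sorted_list_of_set S ! b"
  by (metis length_sorted_list_of_set sorted_list_of_set.strict_sorted_key_list_of_set sorted_wrt_nth_less)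
lemma ss_mem: "finite S \<Longrightarrow> t < card S \<Longrightarrow> sorted_list_of_set S ! t \<in> S"
  by (metis length_sorted_list_of_set nth_mem set_sorted_list_of_set)
lemma ss_surj: "finite S \<Longrightarrow> x \<in> S \<Longrightarrow> \<exists>t<card S. sorted_list_of_set S ! t = x"
  by (metis in_set_conv_nth length_sorted_list_of_set set_sorted_list_of_set)
lemma ss_less_iff: "finite S \<Longrightarrow> a < card S \<Longrightarrow> b < card S \<Longrightarrow>
   (sorted_list_of_set S ! a < sorted_list_of_set S ! b) = (a < b)"
  by (metis ss_less not_less_iff_gr_or_eq order.asym)
lemma ss_inj: "finite S \<Longrightarrow> inj_on (\<lambda>t. sorted_list_of_set S ! t) {0..<card S}"
  unfolding inj_on_def by (metis atLeastLessThan_iff ss_less_iff nat_neq_iff)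
lemma ss_image: "finite S \<Longrightarrow> (\<lambda>t. sorted_list_of_set S ! t) ` {0..<card S} = S"
  using ss_mem ss_surj by fastforce

lemma ss_rank: assumes "finite S" "t < card S"
  shows "card {x\<in>S. x < sorted_list_of_set S ! t} = t"
proof -
  have "{x\<in>S. x < sorted_list_of_set S ! t} = (\<lambda>i. sorted_list_of_set S ! i) ` {0..<t}"
  proof
    show "{x \<in> S. x < sorted_list_of_set S ! t} \<subseteq> (\<lambda>i. sorted_list_of_set S ! i) ` {0..<t}"
    proof
      fix x assume "x \<in> {x \<in> S. x < sorted_list_of_set S ! t}"
      then obtain u where u: "u < card S" "sorted_list_of_set S ! u = x" "x < sorted_list_of_set S ! t"
        using ss_surj[OF assms(1)] by blast
      then have "u < t" using ss_less_iff[OF assms(1) u(1) assms(2)] by simp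
      then show "x \<in> (\<lambda>i. sorted_list_of_set S ! i) ` {0..<t}" using u by auto
    qed
  next
    show "(\<lambda>i. sorted_list_of_set S ! i) ` {0..<t} \<subseteq> {x \<in> S. x < sorted_list_of_set S ! t}"
      using assms ss_mem ss_less by (auto intro!: ss_mem dest: less_trans)
  qed
  moreover have "inj_on (\<lambda>i. sorted_list_of_set S ! i) {0..<t}"
    by (rule inj_on_subset[OF ss_inj[OF assms(1)]]) (use assms(2) in auto)
  ultimately show ?thesis by (simp add: card_image)
qed

lemma length_subl[simp]: "length (subl zs S) = card S" by (simp add: subl_def)
lemma nth_subl: "t < card S \<Longrightarrow> subl zs S ! t = zs ! (sorted_list_of_set S ! t)" by (simp add: subl_def)

lemma set_subl: assumes "finite S" shows "set (subl zs S) = (\<lambda>i. zs ! i) ` S"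
proof -
  have "set (subl zs S) = (\<lambda>t. zs ! (sorted_list_of_set S ! t)) ` {0..<card S}" by (simp add: subl_def)
  also have "\<dots> = (\<lambda>i. zs ! i) ` ((\<lambda>t. sorted_list_of_set S ! t) ` {0..<card S})" by (simp add: image_image)
  finally show ?thesis using ss_image[OF assms] by simp
qed

lemma pairs_reindex:
  fixes f :: "nat \<Rightarrow> nat" and g :: "nat \<Rightarrow> nat \<Rightarrow> int"
  assumes mono: "\<And>a b. a < b \<Longrightarrow> b < k \<Longrightarrow> f a < f b"
  shows "(\<Prod>(a,b)\<in>{(a,b). a < b \<and> b < k}. g (f a) (f b))
       = (\<Prod>(i,j)\<in>{(i,j). i < j \<and> i \<in> f ` {0..<k} \<and> j \<in> f ` {0..<k}}. g i j)"
proof -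
  let ?h = "\<lambda>(a,b). (f a, f b)"
  have injf: "inj_on f {0..<k}" unfolding inj_on_def by (metis atLeastLessThan_iff mono nat_neq_iff)
  have inj: "inj_on ?h {(a,b). a < b \<and> b < k}"
    using injf unfolding inj_on_def by auto
  have img: "?h ` {(a,b). a < b \<and> b < k} = {(i,j). i < j \<and> i \<in> f ` {0..<k} \<and> j \<in> f ` {0..<k}}"
  proof
    show "?h ` {(a,b). a < b \<and> b < k} \<subseteq> {(i,j). i < j \<and> i \<in> f ` {0..<k} \<and> j \<in> f ` {0..<k}}"
      using mono by auto
  next
    show "{(i,j). i < j \<and> i \<in> f ` {0..<k} \<and> j \<in> f ` {0..<k}} \<subseteq> ?h ` {(a,b). a < b \<and> b < k}"
    proof
      fix p assume "p \<in> {(i,j). i < j \<and> i \<in> f ` {0..<k} \<and> j \<in> f ` {0..<k}}"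
      then obtain a b where p: "p = (f a, f b)" "a < k" "b < k" "f a < f b" by auto
      have "a < b" using p mono by (metis nat_neq_iff order.asym)
      then show "p \<in> ?h ` {(a,b). a < b \<and> b < k}" using p by auto
    qed
  qed
  have "(\<Prod>(i,j)\<in>{(i,j). i < j \<and> i \<in> f ` {0..<k} \<and> j \<in> f ` {0..<k}}. g i j)
      = (\<Prod>p\<in>?h ` {(a,b). a < b \<and> b < k}. (\<lambda>(i,j). g i j) p)" using img by simp
  also have "\<dots> = (\<Prod>p\<in>{(a,b). a < b \<and> b < k}. ((\<lambda>(i,j). g i j) \<circ> ?h) p)"
    by (rule prod.reindex[OF inj])
  also have "\<dots> = (\<Prod>(a,b)\<in>{(a,b). a < b \<and> b < k}. g (f a) (f b))"
    by (rule prod.cong) auto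
  finally show ?thesis by simp
qed

lemma prs_subl: assumes "finite S"
  shows "prs (subl zs S) = (\<Prod>(i,j)\<in>{(i,j). i < j \<and> i \<in> S \<and> j \<in> S}. sg (zs!i) (zs!j))"
proof -
  have "prs (subl zs S) = (\<Prod>(a,b)\<in>{(a,b). a < b \<and> b < card S}.
      sg (zs ! (sorted_list_of_set S ! a)) (zs ! (sorted_list_of_set S ! b)))"
    unfolding prs_def by (rule prod.cong) (auto simp: nth_subl)
  also have "\<dots> = (\<Prod>(i,j)\<in>{(i,j). i < j \<and> i \<in> (\<lambda>t. sorted_list_of_set S ! t) ` {0..<card S}
        \<and> j \<in> (\<lambda>t. sorted_list_of_set S ! t) ` {0..<card S}}. sg (zs!i) (zs!j))"
    by (rule pairs_reindex[where g = "\<lambda>i j. sg (zs!i) (zs!j)"]) (rule ss_less[OF assms])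
  finally show ?thesis using ss_image[OF assms] by simp
qed

definition Xf :: "nat set \<Rightarrow> nat set \<Rightarrow> int" where
  "Xf A B = (\<Prod>p\<in>A \<times> B. sg (fst p) (snd p))"
definition Yf :: "nat \<Rightarrow> nat set \<Rightarrow> int" where
  "Yf d S = (\<Prod>p\<in>S \<times> ({0..<d} - S). if snd p < fst p then -1 else 1)"

lemma shuffle:
  assumes dz: "distinct zs" and SS: "S \<subseteq> {0..<length zs}"
  shows "prs zs = prs (subl zs S) * prs (subl zs ({0..<length zs} - S))
     * Xf (set (subl zs S)) (set (subl zs ({0..<length zs} - S))) * Yf (length zs) S"
proof -
  define d where "d = length zs"
  define Sc where "Sc = {0..<d} - S"
  define G where "G = (\<lambda>(i,j). sg (zs!i) (zs!j))"
  have finS: "finite S" using SS finite_subset by blast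
  have finSc: "finite Sc" unfolding Sc_def by simp
  define A1 where "A1 = {(i,j). i < j \<and> i \<in> S \<and> j \<in> S}"
  define A2 where "A2 = {(i,j). i < j \<and> i \<in> Sc \<and> j \<in> Sc}"
  define A3 where "A3 = {(i,j). i < j \<and> j < d \<and> (i \<in> S \<longleftrightarrow> j \<notin> S)}"
  have finPd: "finite {(i,j). i < j \<and> j < d}"
    by (rule finite_subset[of _ "{0..<d} \<times> {0..<d}"]) auto
  have Pd: "{(i,j). i < j \<and> j < d} = A1 \<union> A2 \<union> A3"
    using SS unfolding A1_def A2_def A3_def Sc_def d_def by auto
  have fin1: "finite A1" "finite A2" "finite A3" using finPd Pd by (auto intro: finite_subset)
  have "prs zs = (\<Prod>p\<in>A1 \<union> A2 \<union> A3. G p)"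
    unfolding prs_def G_def d_def[symmetric] Pd by simp
  also have "\<dots> = (\<Prod>p\<in>A1. G p) * (\<Prod>p\<in>A2. G p) * (\<Prod>p\<in>A3. G p)"
  proof -
    have d12: "A1 \<inter> A2 = {}" "(A1 \<union> A2) \<inter> A3 = {}" unfolding A1_def A2_def A3_def Sc_def by auto
    have "(\<Prod>p\<in>A1 \<union> A2 \<union> A3. G p) = (\<Prod>p\<in>A1 \<union> A2. G p) * (\<Prod>p\<in>A3. G p)"
      by (rule prod.union_disjoint) (use fin1 d12 in auto)
    moreover have "(\<Prod>p\<in>A1 \<union> A2. G p) = (\<Prod>p\<in>A1. G p) * (\<Prod>p\<in>A2. G p)"
      by (rule prod.union_disjoint) (use fin1 d12 in auto)
    ultimately show ?thesis by simp
  qed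
  finally have e1: "prs zs = (\<Prod>p\<in>A1. G p) * (\<Prod>p\<in>A2. G p) * (\<Prod>p\<in>A3. G p)" .
  have p1: "(\<Prod>p\<in>A1. G p) = prs (subl zs S)"
    unfolding prs_subl[OF finS] A1_def G_def by simp
  have p2: "(\<Prod>p\<in>A2. G p) = prs (subl zs Sc)"
    unfolding prs_subl[OF finSc] A2_def G_def by simp
  define \<phi> where "\<phi> = (\<lambda>(s::nat, j::nat). (min s j, max s j))"
  have injphi: "inj_on \<phi> (S \<times> Sc)"
    unfolding inj_on_def \<phi>_def Sc_def by (auto simp: min_def max_def split: if_splits)
  have imgphi: "\<phi> ` (S \<times> Sc) = A3"
  proof
    show "\<phi> ` (S \<times> Sc) \<subseteq> A3"
    proof
      fix p assume "p \<in> \<phi> ` (S \<times> Sc)"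
      then obtain s j where sj: "p = \<phi> (s,j)" "s \<in> S" "j \<in> Sc" by auto
      have "s \<noteq> j" "s < d" "j < d" "j \<notin> S" using sj SS unfolding Sc_def d_def by auto
      then show "p \<in> A3" using sj unfolding \<phi>_def A3_def by (cases "s < j") auto
    qed
  next
    show "A3 \<subseteq> \<phi> ` (S \<times> Sc)"
    proof
      fix p assume "p \<in> A3"
      then obtain i j where p: "p = (i,j)" "i < j" "j < d" "i \<in> S \<longleftrightarrow> j \<notin> S" unfolding A3_def by auto
      show "p \<in> \<phi> ` (S \<times> Sc)"
      proof (cases "i \<in> S")
        case True
        then have "(i,j) \<in> S \<times> Sc" "\<phi> (i,j) = p" using p unfolding Sc_def \<phi>_def by auto
        then show ?thesis by (metis image_eqI)
      next
        case False
        then have "(j,i) \<in> S \<times> Sc" "\<phi> (j,i) = p" using p unfolding Sc_def \<phi>_def by auto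
        then show ?thesis by (metis image_eqI)
      qed
    qed
  qed
  have znth: "zs ! s \<noteq> zs ! j" if "s \<in> S" "j \<in> Sc" for s j
    using that dz SS unfolding Sc_def d_def by (auto simp: nth_eq_iff_index_eq)
  have "(\<Prod>p\<in>A3. G p) = (\<Prod>p\<in>\<phi> ` (S \<times> Sc). G p)" using imgphi by simp
  also have "\<dots> = (\<Prod>p\<in>S \<times> Sc. G (\<phi> p))" by (subst prod.reindex[OF injphi]) simp
  also have "\<dots> = (\<Prod>p\<in>S \<times> Sc. sg (zs ! fst p) (zs ! snd p) * (if snd p < fst p then -1 else 1))"
  proof (rule prod.cong[OF refl])
    fix p assume "p \<in> S \<times> Sc"
    then obtain s j where p: "p = (s,j)" "s \<in> S" "j \<in> Sc" by auto
    have "zs ! s \<noteq> zs ! j" using znth p by auto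
    then show "G (\<phi> p) = sg (zs ! fst p) (zs ! snd p) * (if snd p < fst p then -1 else 1)"
      using p unfolding G_def \<phi>_def sg_def by (auto simp: min_def max_def)
  qed
  also have "\<dots> = (\<Prod>p\<in>S \<times> Sc. sg (zs ! fst p) (zs ! snd p)) * Yf d S"
    unfolding Yf_def Sc_def by (simp add: prod.distrib)
  finally have p3: "(\<Prod>p\<in>A3. G p) = (\<Prod>p\<in>S \<times> Sc. sg (zs ! fst p) (zs ! snd p)) * Yf d S" .
  define \<psi> where "\<psi> = (\<lambda>(s, j). (zs ! s, zs ! j))"
  have injz: "inj_on (\<lambda>i. zs ! i) {0..<d}" using dz unfolding d_def inj_on_def
    by (auto simp: nth_eq_iff_index_eq)
  have injpsi: "inj_on \<psi> (S \<times> Sc)"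
    using inj_onD[OF injz] SS unfolding inj_on_def \<psi>_def Sc_def d_def by (auto, blast+)
  have imgpsi: "\<psi> ` (S \<times> Sc) = set (subl zs S) \<times> set (subl zs Sc)"
    unfolding \<psi>_def set_subl[OF finS] set_subl[OF finSc] by auto
  have "(\<Prod>p\<in>S \<times> Sc. sg (zs ! fst p) (zs ! snd p)) = (\<Prod>p\<in>S \<times> Sc. (\<lambda>q. sg (fst q) (snd q)) (\<psi> p))"
    unfolding \<psi>_def by (rule prod.cong) auto
  also have "\<dots> = (\<Prod>q\<in>\<psi> ` (S \<times> Sc). sg (fst q) (snd q))" by (subst prod.reindex[OF injpsi]) (simp add: comp_def)
  also have "\<dots> = Xf (set (subl zs S)) (set (subl zs Sc))" unfolding imgpsi Xf_def ..
  finally have p4: "(\<Prod>p\<in>S \<times> Sc. sg (zs ! fst p) (zs ! snd p)) = Xf (set (subl zs S)) (set (subl zs Sc))" .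
  show ?thesis using e1 p1 p2 p3 p4 unfolding Sc_def d_def by simp
qed


lemma subl_range: "m \<le> n \<Longrightarrow> subl zs {m..<n} = map (\<lambda>t. zs ! (m + t)) [0..<n - m]"
  unfolding subl_def by (auto intro!: map_cong)

lemma prs_append: assumes "distinct (xs @ ys)"
  shows "prs (xs @ ys) = prs xs * prs ys * Xf (set xs) (set ys)"
proof -
  let ?zs = "xs @ ys" and ?S = "{0..<length xs}"
  have sc: "{0..<length ?zs} - ?S = {length xs..<length xs + length ys}" by auto
  have a: "subl ?zs ?S = xs"
    by (subst subl_range) (auto intro!: nth_equalityI simp: nth_append)
  have b: "subl ?zs ({0..<length ?zs} - ?S) = ys"
    unfolding sc by (subst subl_range) (auto intro!: nth_equalityI simp: nth_append)
  have c: "Yf (length ?zs) ?S = 1" unfolding Yf_def by (rule prod.neutral) auto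
  show ?thesis using shuffle[OF assms, of ?S] a b c by simp
qed

lemma Jrep_eq:
  assumes "S \<subseteq> {0..<length L}" "card S = k" "k \<le> length J"
  shows "Jrep J L S = subl L S @ drop k J"
  using assms unfolding Jrep_def
  by (auto intro!: nth_equalityI simp: nth_append nth_subl)

lemma length_Jrep[simp]: "length (Jrep J L S) = length J" by (simp add: Jrep_def)
lemma length_Lrep[simp]: "length (Lrep J L S) = length L" by (simp add: Lrep_def)

lemma Lrep_S:
  assumes SS: "S \<subseteq> {0..<length L}" and cS: "card S = k" and kJ: "k \<le> length J"
  shows "subl (Lrep J L S) S = take k J"
proof (rule nth_equalityI)
  have fin: "finite S" using SS finite_subset by blast
  show "length (subl (Lrep J L S) S) = length (take k J)" using cS kJ by simp
  fix t assume "t < length (subl (Lrep J L S) S)"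
  then have t: "t < card S" by simp
  have m: "sorted_list_of_set S ! t \<in> S" using ss_mem[OF fin t] .
  then have "sorted_list_of_set S ! t < length L" using SS by auto
  then show "subl (Lrep J L S) S ! t = take k J ! t"
    using m t cS kJ ss_rank[OF fin t] by (simp add: nth_subl Lrep_def)
qed

lemma Lrep_Sc:
  assumes SS: "S \<subseteq> {0..<length L}"
  shows "subl (Lrep J L S) ({0..<length L} - S) = subl L ({0..<length L} - S)"
proof (rule nth_equalityI)
  let ?Sc = "{0..<length L} - S"
  have fin: "finite ?Sc" by simp
  show "length (subl (Lrep J L S) ?Sc) = length (subl L ?Sc)" by simp
  fix t assume "t < length (subl (Lrep J L S) ?Sc)"
  then have t: "t < card ?Sc" by simp
  have m: "sorted_list_of_set ?Sc ! t \<in> ?Sc" using ss_mem[OF fin t] .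
  then show "subl (Lrep J L S) ?Sc ! t = subl L ?Sc ! t"
    using t by (simp add: nth_subl Lrep_def)
qed

lemma set_split:
  assumes "S \<subseteq> {0..<length zs}"
  shows "set zs = set (subl zs S) \<union> set (subl zs ({0..<length zs} - S))"
proof -
  have fin: "finite S" using assms finite_subset by blast
  have "set zs = (\<lambda>i. zs ! i) ` {0..<length zs}" by (auto simp: in_set_conv_nth)
  also have "\<dots> = (\<lambda>i. zs ! i) ` S \<union> (\<lambda>i. zs ! i) ` ({0..<length zs} - S)" using assms by auto
  finally show ?thesis using set_subl[OF fin] set_subl[of "{0..<length zs} - S"] by simp
qed

lemma set_Jrep:
  assumes "S \<subseteq> {0..<length L}" "card S = k" "k \<le> length J"
  shows "set (Jrep J L S) = (\<lambda>i. L ! i) ` S \<union> set (drop k J)"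
proof -
  have fin: "finite S" using assms(1) finite_subset by blast
  show ?thesis using Jrep_eq[OF assms] set_subl[OF fin] by simp
qed

lemma set_Lrep:
  assumes "S \<subseteq> {0..<length L}" "card S = k" "k \<le> length J"
  shows "set (Lrep J L S) = set (take k J) \<union> (\<lambda>i. L ! i) ` ({0..<length L} - S)"
proof -
  have "set (Lrep J L S) = set (subl (Lrep J L S) S) \<union> set (subl (Lrep J L S) ({0..<length (Lrep J L S)} - S))"
    by (rule set_split) (use assms(1) in simp)
  then show ?thesis using Lrep_S[OF assms] Lrep_Sc[OF assms(1)] set_subl[of "{0..<length L} - S" L] by simp
qed

lemma prs_Lrep:
  assumes SS: "S \<subseteq> {0..<length L}" and "card S = k" "k \<le> length J" and dis: "distinct (Lrep J L S)"
  shows "prs (Lrep J L S) = prs (take k J) * prs (subl L ({0..<length L} - S))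
      * Xf (set (take k J)) (set (subl L ({0..<length L} - S))) * Yf (length L) S"
  using shuffle[OF dis, of S] SS Lrep_S[OF assms(1-3)] Lrep_Sc[OF SS] by simp

lemma prs_L:
  assumes SS: "S \<subseteq> {0..<length L}" and dis: "distinct L"
  shows "prs L = prs (subl L S) * prs (subl L ({0..<length L} - S))
      * Xf (set (subl L S)) (set (subl L ({0..<length L} - S))) * Yf (length L) S"
  using shuffle[OF dis SS] .


lemma pair_eq: "({#a, b#} = {#c, d#}) = ((a = c \<and> b = d) \<or> (a = d \<and> b = c))"
  by (auto simp: add_eq_conv_ex)

lemma plterm_nz: "plterm A B m \<noteq> 0 \<Longrightarrow> m = {#set A, set B#} \<and> distinct A \<and> distinct B"
  unfolding plterm_def psgn_def by (auto split: if_splits)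

lemma psgn_nz: "distinct A \<Longrightarrow> psgn A \<noteq> 0" unfolding psgn_def by simp

lemma sum_single: "finite A \<Longrightarrow> a \<in> A \<Longrightarrow> (\<And>b. b \<in> A \<Longrightarrow> b \<noteq> a \<Longrightarrow> f b = 0) \<Longrightarrow> sum f A = f a"
  by (simp add: sum.remove sum.neutral)

locale pl =
  fixes J L :: "nat list" and k :: nat
  assumes dJ: "distinct J" and dL: "distinct L" and k1: "1 \<le> k" and kJ: "k \<le> length J"
    and JL: "length J \<le> length L"
begin

abbreviation "P \<equiv> set (take k J)"
abbreviation "Q \<equiv> set (drop k J)"
abbreviation "SJ \<equiv> set J"
abbreviation "SL \<equiv> set L"
abbreviation "Sc S \<equiv> {0..<length L} - S"
abbreviation "SS \<equiv> {S. S \<subseteq> {0..<length L} \<and> card S = k}"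
abbreviation "Lv S \<equiv> (\<lambda>i. L ! i) ` S"

lemma PQ: "P \<inter> Q = {}" "SJ = P \<union> Q" "card P = k" "card Q = length J - k"
proof -
  show "P \<inter> Q = {}" using dJ by (metis distinct_append append_take_drop_id disjoint_iff_not_equal)
  show "SJ = P \<union> Q" by (metis append_take_drop_id set_append)
  show "card P = k" using dJ kJ by (simp add: distinct_card)
  show "card Q = length J - k" using dJ by (simp add: distinct_card)
qed

lemma cardJ: "card SJ = length J" using dJ by (simp add: distinct_card)
lemma cardL: "card SL = length L" using dL by (simp add: distinct_card)

lemma Lv_inj: "inj_on (\<lambda>i. L ! i) {0..<length L}"
  using dL unfolding inj_on_def by (auto simp: nth_eq_iff_index_eq)

lemma card_Lv: "S \<subseteq> {0..<length L} \<Longrightarrow> card (Lv S) = card S"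
  by (meson Lv_inj card_image inj_on_subset)

lemma Lv_all: "Lv {0..<length L} = SL" by (auto simp: in_set_conv_nth)

lemma Lv_split: "S \<subseteq> {0..<length L} \<Longrightarrow> Lv S \<inter> Lv (Sc S) = {} \<and> Lv S \<union> Lv (Sc S) = SL"
proof -
  assume S: "S \<subseteq> {0..<length L}"
  have "Lv S \<inter> Lv (Sc S) = {}" using inj_on_image_Int[OF Lv_inj, of S "Sc S"] S by auto
  moreover have "Lv S \<union> Lv (Sc S) = SL" using S Lv_all by (metis Un_Diff_cancel image_Un sup.absorb_iff2)
  ultimately show ?thesis by simp
qed

lemma setJ': "S \<in> SS \<Longrightarrow> set (Jrep J L S) = Lv S \<union> Q"
  using set_Jrep kJ by auto
lemma setL': "S \<in> SS \<Longrightarrow> set (Lrep J L S) = P \<union> Lv (Sc S)"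
  using set_Lrep kJ by auto

lemma Lv_sub: "S \<subseteq> {0..<length L} \<Longrightarrow> Lv S \<subseteq> SL" unfolding Lv_all[symmetric] by (rule image_mono)

lemma Lv_filter: "Lv {i\<in>{0..<length L}. L ! i \<in> A} = A \<inter> SL"
  by (auto simp: in_set_conv_nth)
lemma Sc_filter: "Sc {i\<in>{0..<length L}. L ! i \<in> A} = {i\<in>{0..<length L}. L ! i \<in> - A}"
  by auto

lemma valid_iff:
  assumes S: "S \<in> SS"
  shows "(distinct (Jrep J L S) \<and> distinct (Lrep J L S)) \<longleftrightarrow> (Lv S \<inter> Q = {} \<and> Lv (Sc S) \<inter> P = {})"
proof -
  have S1: "S \<subseteq> {0..<length L}" and S2: "card S = k" using S by auto
  have fS: "finite S" using S1 by (rule finite_subset) simp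
  have fLv: "finite (Lv S)" using fS by simp
  have fLc: "finite (Lv (Sc S))" by simp
  have c1: "card (Lv S) = k" using card_Lv[OF S1] S2 by simp
  have c2: "card (Lv (Sc S)) = length L - k" using card_Lv[of "Sc S"] S1 S2
    by (simp add: card_Diff_subset fS)
  have "distinct (Jrep J L S) \<longleftrightarrow> card (Lv S \<union> Q) = length J"
    using setJ'[OF S] card_distinct[of "Jrep J L S"] distinct_card[of "Jrep J L S"] by auto
  also have "\<dots> \<longleftrightarrow> Lv S \<inter> Q = {}"
  proof -
    have eq: "card (Lv S) + card Q = card (Lv S \<union> Q) + card (Lv S \<inter> Q)"
      by (rule card_Un_Int[OF fLv]) simp
    have fi: "finite (Lv S \<inter> Q)" using fLv by simp
    have "card (Lv S \<union> Q) = length J \<longleftrightarrow> card (Lv S \<inter> Q) = 0" using eq c1 PQ(4) kJ by arith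
    then show ?thesis using card_0_eq[OF fi] by simp
  qed
  finally have a: "distinct (Jrep J L S) \<longleftrightarrow> Lv S \<inter> Q = {}" .
  have "distinct (Lrep J L S) \<longleftrightarrow> card (P \<union> Lv (Sc S)) = length L"
    using setL'[OF S] card_distinct[of "Lrep J L S"] distinct_card[of "Lrep J L S"] by auto
  also have "\<dots> \<longleftrightarrow> Lv (Sc S) \<inter> P = {}"
  proof -
    have eq: "card P + card (Lv (Sc S)) = card (P \<union> Lv (Sc S)) + card (P \<inter> Lv (Sc S))"
      by (rule card_Un_Int[OF _ fLc]) simp
    have fi: "finite (P \<inter> Lv (Sc S))" using fLc by simp
    have "card (P \<union> Lv (Sc S)) = length L \<longleftrightarrow> card (P \<inter> Lv (Sc S)) = 0"
      using eq c2 PQ(3) kJ JL by arith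
    then show ?thesis using card_0_eq[OF fi] by (simp add: Int_commute)
  qed
  finally show ?thesis using a by simp
qed

lemma Z1sign:
  assumes PL: "P \<subseteq> SL"
  defines "S0 \<equiv> {i\<in>{0..<length L}. L ! i \<in> P}"
  shows "S0 \<in> SS" "set (Jrep J L S0) = SJ" "set (Lrep J L S0) = SL"
    "psgn (Jrep J L S0) * psgn (Lrep J L S0) = psgn J * psgn L"
proof -
  have S1: "S0 \<subseteq> {0..<length L}" unfolding S0_def by auto
  have LvS0: "Lv S0 = P" unfolding S0_def Lv_filter using PL by auto
  have LvSc: "Lv (Sc S0) = SL - P" using Lv_split[OF S1] LvS0 by auto
  have c: "card S0 = k" using card_Lv[OF S1] LvS0 PQ(3) by simp
  show S0: "S0 \<in> SS" using S1 c by simp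
  show sJ: "set (Jrep J L S0) = SJ" using setJ'[OF S0] LvS0 PQ(2) by simp
  show sL: "set (Lrep J L S0) = SL" using setL'[OF S0] LvSc PL by auto
  have dJ': "distinct (Jrep J L S0)" using sJ cardJ by (metis card_distinct length_Jrep)
  have dL': "distinct (Lrep J L S0)" using sL cardL by (metis card_distinct length_Lrep)
  have fin: "finite S0" using S1 finite_subset by blast
  have eJ: "prs J = prs (take k J) * prs (drop k J) * Xf P Q"
    using prs_append[of "take k J" "drop k J"] dJ by simp
  have eJ': "prs (Jrep J L S0) = prs (subl L S0) * prs (drop k J) * Xf P Q"
    using prs_append[of "subl L S0" "drop k J"] dJ' Jrep_eq[OF S1 c kJ] set_subl[OF fin] LvS0 by simp
  have eL: "prs L = prs (subl L S0) * prs (subl L (Sc S0)) * Xf P (set (subl L (Sc S0))) * Yf (length L) S0"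
    using prs_L[OF S1 dL] set_subl[OF fin] LvS0 by simp
  have eL': "prs (Lrep J L S0) = prs (take k J) * prs (subl L (Sc S0)) * Xf P (set (subl L (Sc S0))) * Yf (length L) S0"
    using prs_Lrep[OF S1 c kJ dL'] .
  show "psgn (Jrep J L S0) * psgn (Lrep J L S0) = psgn J * psgn L"
  proof -
    have "psgn (Jrep J L S0) * psgn (Lrep J L S0) = prs (Jrep J L S0) * prs (Lrep J L S0)"
      using psgn_prs[OF dJ'] psgn_prs[OF dL'] by simp
    also have "\<dots> = prs J * prs L" unfolding eJ eJ' eL eL' by (simp only: mult_ac)
    also have "\<dots> = psgn J * psgn L" using psgn_prs[OF dJ] psgn_prs[OF dL] by simp
    finally show ?thesis .
  qed
qed

lemma Z2sign:
  assumes ee: "length J = length L" and QL: "Q \<subseteq> SL"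
  defines "S0 \<equiv> {i\<in>{0..<length L}. L ! i \<in> - Q}"
  shows "S0 \<in> SS" "set (Jrep J L S0) = SL" "set (Lrep J L S0) = SJ"
    "psgn (Jrep J L S0) * psgn (Lrep J L S0) = psgn J * psgn L"
proof -
  have S1: "S0 \<subseteq> {0..<length L}" unfolding S0_def by auto
  have LvS0: "Lv S0 = SL - Q" unfolding S0_def Lv_filter by auto
  have "Sc S0 = {i\<in>{0..<length L}. L ! i \<in> Q}" unfolding S0_def by auto
  then have LvSc: "Lv (Sc S0) = Q" using Lv_filter QL by auto
  have "card (SL - Q) = length L - (length J - k)"
    using card_Diff_subset[OF _ QL] cardL PQ(4) by simp
  then have c: "card S0 = k" using card_Lv[OF S1] LvS0 ee kJ by simp
  show S0: "S0 \<in> SS" using S1 c by simp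
  show sJ: "set (Jrep J L S0) = SL" using setJ'[OF S0] LvS0 QL by auto
  show sL: "set (Lrep J L S0) = SJ" using setL'[OF S0] LvSc PQ(2) by auto
  have dJ': "distinct (Jrep J L S0)" using sJ cardL ee by (metis card_distinct length_Jrep)
  have dL': "distinct (Lrep J L S0)" using sL cardJ ee by (metis card_distinct length_Lrep)
  have fin: "finite S0" using S1 finite_subset by blast
  have fin2: "finite (Sc S0)" by simp
  have eJ: "prs J = prs (take k J) * prs (drop k J) * Xf P Q"
    using prs_append[of "take k J" "drop k J"] dJ by simp
  have eJ': "prs (Jrep J L S0) = prs (subl L S0) * prs (drop k J) * Xf (SL - Q) Q"
    using prs_append[of "subl L S0" "drop k J"] dJ' Jrep_eq[OF S1 c kJ] set_subl[OF fin] LvS0 by simp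
  have eL: "prs L = prs (subl L S0) * prs (subl L (Sc S0)) * Xf (SL - Q) Q * Yf (length L) S0"
    using prs_L[OF S1 dL] set_subl[OF fin] set_subl[OF fin2] LvS0 LvSc by simp
  have eL': "prs (Lrep J L S0) = prs (take k J) * prs (subl L (Sc S0)) * Xf P Q * Yf (length L) S0"
    using prs_Lrep[OF S1 c kJ dL'] set_subl[OF fin2] LvSc by simp
  show "psgn (Jrep J L S0) * psgn (Lrep J L S0) = psgn J * psgn L"
  proof -
    have "psgn (Jrep J L S0) * psgn (Lrep J L S0) = prs (Jrep J L S0) * prs (Lrep J L S0)"
      using psgn_prs[OF dJ'] psgn_prs[OF dL'] by simp
    also have "\<dots> = prs J * prs L" unfolding eJ eJ' eL eL' by (simp only: mult_ac)
    also have "\<dots> = psgn J * psgn L" using psgn_prs[OF dJ] psgn_prs[OF dL] by simp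
    finally show ?thesis .
  qed
qed


abbreviation "R \<equiv> plucker_rel J L k"
abbreviation "orig \<equiv> {#SJ, SL#}"
abbreviation "vld S \<equiv> distinct (Jrep J L S) \<and> distinct (Lrep J L S)"
abbreviation "mon S \<equiv> {#set (Jrep J L S), set (Lrep J L S)#}"

lemma R_def': "R m = plterm J L m - (\<Sum>S\<in>SS. plterm (Jrep J L S) (Lrep J L S) m)"
  unfolding plucker_rel_def by simp

lemma finSS: "finite SS"
  by (rule finite_subset[of _ "Pow {0..<length L}"]) auto

lemma S_eq: "S \<subseteq> {0..<length L} \<Longrightarrow> S = {i\<in>{0..<length L}. L ! i \<in> Lv S}"
proof -
  assume S: "S \<subseteq> {0..<length L}"
  show ?thesis
  proof
    show "S \<subseteq> {i\<in>{0..<length L}. L ! i \<in> Lv S}" using S by auto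
    show "{i\<in>{0..<length L}. L ! i \<in> Lv S} \<subseteq> S"
    proof
      fix x assume "x \<in> {i\<in>{0..<length L}. L ! i \<in> Lv S}"
      then obtain i where "i \<in> S" "L ! x = L ! i" "x < length L" by auto
      then show "x \<in> S" using inj_onD[OF Lv_inj, of x i] S by auto
    qed
  qed
qed

lemma R_nz: "R m \<noteq> 0 \<Longrightarrow> m = orig \<or> (\<exists>S\<in>SS. vld S \<and> m = mon S)"
proof (rule ccontr)
  assume nz: "R m \<noteq> 0" and c: "\<not> (m = orig \<or> (\<exists>S\<in>SS. vld S \<and> m = mon S))"
  have "plterm J L m = 0" using c plterm_nz[of J L m] by auto
  moreover have "(\<Sum>S\<in>SS. plterm (Jrep J L S) (Lrep J L S) m) = 0"
    by (rule sum.neutral) (use c plterm_nz in blast)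
  ultimately show False using nz R_def' by simp
qed

lemma Z1: assumes PL: "P \<subseteq> SL" shows "R m = 0"
proof -
  define S0 where "S0 = {i\<in>{0..<length L}. L ! i \<in> P}"
  note z = Z1sign[OF PL, folded S0_def]
  have "(\<Sum>S\<in>SS. plterm (Jrep J L S) (Lrep J L S) m) = plterm (Jrep J L S0) (Lrep J L S0) m"
  proof (rule sum_single[OF finSS z(1)])
    fix S assume S: "S \<in> SS" "S \<noteq> S0"
    show "plterm (Jrep J L S) (Lrep J L S) m = 0"
    proof (rule ccontr)
      assume "plterm (Jrep J L S) (Lrep J L S) m \<noteq> 0"
      then have "vld S" using plterm_nz by blast
      then have v: "Lv S \<inter> Q = {}" "Lv (Sc S) \<inter> P = {}" using valid_iff[OF S(1)] by auto
      have S1: "S \<subseteq> {0..<length L}" "card S = k" using S by auto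
      have "P \<subseteq> Lv S"
      proof
        fix x assume x: "x \<in> P"
        have "x \<in> Lv S \<union> Lv (Sc S)" using Lv_split[OF S1(1)] PL x by (simp only: subset_iff)
        moreover have "x \<notin> Lv (Sc S)" using v(2) x by (simp only: disjoint_iff) blast
        ultimately show "x \<in> Lv S" by (simp only: Un_iff) simp
      qed
      moreover have "card (Lv S) = card P" using card_Lv[OF S1(1)] S1(2) PQ(3) by simp
      ultimately have "P = Lv S" using card_subset_eq[of "Lv S" P] finite_subset[OF S1(1)] by simp
      then have "Lv S = P" by simp
      then have "S = S0" unfolding S0_def by (intro trans[OF S_eq[OF S1(1)]]) simp
      then show False using S by simp
    qed
  qed
  moreover have "plterm (Jrep J L S0) (Lrep J L S0) m = plterm J L m"
    unfolding plterm_def using z by simp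
  ultimately show ?thesis using R_def' by simp
qed

lemma Z2: assumes ee: "length J = length L" and QL: "Q \<subseteq> SL" shows "R m = 0"
proof -
  define S0 where "S0 = {i\<in>{0..<length L}. L ! i \<in> - Q}"
  note z = Z2sign[OF ee QL, folded S0_def]
  have cd: "card (SL - Q) = k"
    using card_Diff_subset[OF _ QL] cardL PQ(4) ee kJ by simp
  have "(\<Sum>S\<in>SS. plterm (Jrep J L S) (Lrep J L S) m) = plterm (Jrep J L S0) (Lrep J L S0) m"
  proof (rule sum_single[OF finSS z(1)])
    fix S assume S: "S \<in> SS" "S \<noteq> S0"
    show "plterm (Jrep J L S) (Lrep J L S) m = 0"
    proof (rule ccontr)
      assume "plterm (Jrep J L S) (Lrep J L S) m \<noteq> 0"
      then have "vld S" using plterm_nz by blast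
      then have v: "Lv S \<inter> Q = {}" using valid_iff[OF S(1)] by auto
      have S1: "S \<subseteq> {0..<length L}" "card S = k" using S by auto
      have "Lv S \<subseteq> SL - Q" using v Lv_sub[OF S1(1)] by auto
      moreover have "card (Lv S) = card (SL - Q)" using card_Lv[OF S1(1)] S1(2) cd by simp
      ultimately have "Lv S = SL - Q" using card_subset_eq[of "SL - Q" "Lv S"] by simp
      then have "S = S0" unfolding S0_def by (intro trans[OF S_eq[OF S1(1)]]) auto
      then show False using S by simp
    qed
  qed
  moreover have "plterm (Jrep J L S0) (Lrep J L S0) m = plterm J L m"
    unfolding plterm_def using z by (simp add: add_mset_commute)
  ultimately show ?thesis using R_def' by simp
qed

lemma card_J': "S \<in> SS \<Longrightarrow> vld S \<Longrightarrow> card (set (Jrep J L S)) = length J"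
  by (simp add: distinct_card)
lemma card_L': "S \<in> SS \<Longrightarrow> vld S \<Longrightarrow> card (set (Lrep J L S)) = length L"
  by (simp add: distinct_card)

context
  assumes nZ1: "\<not> P \<subseteq> SL" and nZ2: "\<not> (length J = length L \<and> Q \<subseteq> SL)"
begin

lemma mono_ne_orig: assumes S: "S \<in> SS" and v: "vld S" shows "mon S \<noteq> orig"
proof
  assume eq: "mon S = orig"
  have d: "Lv S \<inter> Q = {}" using valid_iff[OF S] v by auto
  have S1: "S \<subseteq> {0..<length L}" using S by auto
  show False
  proof (cases "set (Jrep J L S) = SJ")
    case True
    then have "Lv S \<union> Q = P \<union> Q" using setJ'[OF S] PQ(2) by simp
    then have "Lv S = P" using d PQ(1) by blast
    then show False using nZ1 Lv_sub[OF S1] by simp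
  next
    case False
    then have a: "set (Jrep J L S) = SL" using eq unfolding pair_eq by blast
    then have "length J = length L" using card_J'[OF S v] cardL by simp
    moreover have "Q \<subseteq> SL" using a setJ'[OF S] by auto
    ultimately show False using nZ2 by simp
  qed
qed

lemma mono_inj: assumes S: "S \<in> SS" and v: "vld S" and S': "S' \<in> SS" and v': "vld S'"
  and eq: "mon S = mon S'" shows "S = S'"
proof -
  have d: "Lv S \<inter> Q = {}" using valid_iff[OF S] v by auto
  have d': "Lv S' \<inter> Q = {}" using valid_iff[OF S'] v' by auto
  have S1: "S \<subseteq> {0..<length L}" "S' \<subseteq> {0..<length L}" using S S' by auto
  show ?thesis
  proof (cases "set (Jrep J L S) = set (Jrep J L S')")
    case True
    then have "Lv S \<union> Q = Lv S' \<union> Q" using setJ'[OF S] setJ'[OF S'] by simp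
    then have "Lv S = Lv S'" using d d' by blast
    then show ?thesis using inj_on_image_eq_iff[OF Lv_inj S1(1) S1(2)] by simp
  next
    case False
    then have a: "set (Jrep J L S) = set (Lrep J L S')" using eq unfolding pair_eq by blast
    then have "length J = length L" using card_J'[OF S v] card_L'[OF S' v'] by simp
    moreover have "Q \<subseteq> SL"
    proof -
      have "Q \<subseteq> P \<union> Lv (Sc S')" using a setJ'[OF S] setL'[OF S'] by auto
      then have "Q \<subseteq> Lv (Sc S')" using PQ(1) by blast
      then show ?thesis using Lv_sub[of "Sc S'"] by auto
    qed
    ultimately show ?thesis using nZ2 by simp
  qed
qed

lemma orig_nz: "R orig \<noteq> 0"
proof -
  have "(\<Sum>S\<in>SS. plterm (Jrep J L S) (Lrep J L S) orig) = 0"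
  proof (rule sum.neutral, rule ballI, rule ccontr)
    fix S assume S: "S \<in> SS" and "plterm (Jrep J L S) (Lrep J L S) orig \<noteq> 0"
    then have "vld S" "orig = mon S" using plterm_nz by blast+
    then show False using mono_ne_orig[OF S] by simp
  qed
  moreover have "plterm J L orig = psgn J * psgn L" unfolding plterm_def by simp
  ultimately show ?thesis using R_def' dJ dL psgn_nz by simp
qed

lemma mono_nz: assumes S: "S \<in> SS" and v: "vld S" shows "R (mon S) \<noteq> 0"
proof -
  have "(\<Sum>S'\<in>SS. plterm (Jrep J L S') (Lrep J L S') (mon S)) = plterm (Jrep J L S) (Lrep J L S) (mon S)"
  proof (rule sum_single[OF finSS S])
    fix S' assume S': "S' \<in> SS" "S' \<noteq> S"
    show "plterm (Jrep J L S') (Lrep J L S') (mon S) = 0"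
    proof (rule ccontr)
      assume "plterm (Jrep J L S') (Lrep J L S') (mon S) \<noteq> 0"
      then have "vld S'" "mon S = mon S'" using plterm_nz by blast+
      then show False using mono_inj[OF S v S'(1)] S' by auto
    qed
  qed
  moreover have "plterm J L (mon S) = 0" unfolding plterm_def using mono_ne_orig[OF S v] by auto
  moreover have "plterm (Jrep J L S) (Lrep J L S) (mon S) \<noteq> 0"
    unfolding plterm_def using v psgn_nz by simp
  ultimately show ?thesis using R_def' by simp
qed

end

end


lemma setalg1:
  fixes A B P Q :: "nat set"
  assumes "A \<inter> Q = {}" "B \<inter> P = {}" "A \<inter> B = {}" "P \<inter> Q = {}"
  shows "(A \<union> Q) \<inter> (P \<union> B) = (P \<union> Q) \<inter> (A \<union> B)" "(A \<union> Q) \<union> (P \<union> B) = (P \<union> Q) \<union> (A \<union> B)"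
  using assms by auto

lemma setalg2:
  fixes X P Q SL :: "nat set"
  assumes "Q \<subseteq> X" "(P \<union> Q) \<inter> SL \<subseteq> X" "X \<subseteq> P \<union> Q \<union> SL" "X \<inter> (P - SL) = {}" "P \<inter> Q = {}"
  shows "(X - Q) \<union> Q = X" "X - Q \<subseteq> SL" "P \<union> (SL - (X - Q)) = ((P \<union> Q) \<union> SL - X) \<union> ((P \<union> Q) \<inter> SL)"
    "P \<inter> (SL - (X - Q)) = {}"
  using assms by auto

lemma setalg3:
  fixes A B C X U V :: "nat set"
  assumes "A - C = {u}" "u \<in> X" "B \<inter> C \<subseteq> X" "B = A \<union> V" "V \<subseteq> X"
  shows "B \<subseteq> X"
  using assms by auto

lemma setalg4:
  fixes A B C :: "nat set"
  shows "A \<inter> B = {} \<and> A \<union> B = C \<Longrightarrow> B = C - A"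
  by blast

context pl
begin

lemma N: assumes "R m \<noteq> 0"
  shows "\<exists>X Y. m = {#X, Y#} \<and> card X = length J \<and> card Y = length L \<and> X \<inter> Y = SJ \<inter> SL
     \<and> X \<union> Y = SJ \<union> SL \<and> Q \<subseteq> X"
proof (cases "m = orig")
  case True
  then show ?thesis using cardJ cardL PQ(2) by (intro exI[of _ SJ] exI[of _ SL]) simp
next
  case False
  then obtain S where S: "S \<in> SS" "vld S" "m = mon S" using R_nz[OF assms] by blast
  have v: "Lv S \<inter> Q = {}" "Lv (Sc S) \<inter> P = {}" using valid_iff[OF S(1)] S(2) by auto
  have S1: "S \<subseteq> {0..<length L}" using S by auto
  note sp = Lv_split[OF S1]
  note a = setalg1[OF v(1) v(2) conjunct1[OF sp] PQ(1)]
  have "set (Jrep J L S) \<inter> set (Lrep J L S) = SJ \<inter> SL"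
    unfolding setJ'[OF S(1)] setL'[OF S(1)] a(1) using sp PQ(2) by simp
  moreover have "set (Jrep J L S) \<union> set (Lrep J L S) = SJ \<union> SL"
    unfolding setJ'[OF S(1)] setL'[OF S(1)] a(2) using sp PQ(2) by simp
  moreover have "Q \<subseteq> set (Jrep J L S)" unfolding setJ'[OF S(1)] by simp
  ultimately show ?thesis using S card_J'[OF S(1,2)] card_L'[OF S(1,2)]
    by (intro exI[of _ "set (Jrep J L S)"] exI[of _ "set (Lrep J L S)"]) simp
qed

lemma FAM:
  assumes nZ1: "\<not> P \<subseteq> SL" and nZ2: "\<not> (length J = length L \<and> Q \<subseteq> SL)"
    and p1: "card (P - SL) = 1"
    and X1: "SJ \<inter> SL \<subseteq> X" and X2: "Q \<subseteq> X" and X3: "X \<subseteq> SJ \<union> SL" and X4: "card X = length J"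
  shows "R {#X, (SJ \<union> SL - X) \<union> (SJ \<inter> SL)#} \<noteq> 0"
proof (cases "X = SJ")
  case True
  have "(SJ \<union> SL - SJ) \<union> (SJ \<inter> SL) = SL" by blast
  then have "{#X, (SJ \<union> SL - X) \<union> (SJ \<inter> SL)#} = orig" unfolding True by simp
  then show ?thesis using orig_nz[OF nZ1 nZ2] by metis
next
  case False
  obtain u where u: "P - SL = {u}" using p1 card_1_singletonE by blast
  have finX: "finite X" using X3 finite_subset by blast
  have Xu: "X \<inter> (P - SL) = {}"
  proof (rule ccontr)
    assume "X \<inter> (P - SL) \<noteq> {}"
    then have "u \<in> X" using u by auto
    then have "SJ \<subseteq> X" by (rule setalg3[OF u _ X1 PQ(2) X2])
    then have "SJ = X" using card_subset_eq[OF finX] X4 cardJ by simp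
    then show False using False by simp
  qed
  note sa = setalg2[OF X2 _ _ Xu PQ(1)]
  have h2: "(P \<union> Q) \<inter> SL \<subseteq> X" using X1 PQ(2) by simp
  have h3: "X \<subseteq> P \<union> Q \<union> SL" using X3 PQ(2) by simp
  define T where "T = X - Q"
  define S where "S = {i\<in>{0..<length L}. L ! i \<in> T}"
  have TSL: "T \<subseteq> SL" using sa(2)[OF h2 h3] unfolding T_def .
  have S1: "S \<subseteq> {0..<length L}" unfolding S_def by auto
  have LvS: "Lv S = T" unfolding S_def Lv_filter using TSL by auto
  have cT: "card T = k"
  proof -
    have "card T = card X - card Q" unfolding T_def using card_Diff_subset[OF _ X2] finite_subset[OF X2 finX] by simp
    then show ?thesis using X4 PQ(4) kJ by simp
  qed
  have cS: "card S = k" using card_Lv[OF S1] LvS cT by simp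
  have S: "S \<in> SS" using S1 cS by simp
  have LvSc: "Lv (Sc S) = SL - T" using setalg4[OF Lv_split[OF S1]] LvS by simp
  have v: "vld S"
  proof -
    have "Lv S \<inter> Q = {}" unfolding LvS T_def by blast
    moreover have "Lv (Sc S) \<inter> P = {}" unfolding LvSc using sa(4)[OF h2 h3] unfolding T_def by blast
    ultimately show ?thesis using valid_iff[OF S] by simp
  qed
  have "mon S = {#X, (SJ \<union> SL - X) \<union> (SJ \<inter> SL)#}"
    unfolding setJ'[OF S] setL'[OF S] LvS LvSc T_def sa(1)[OF h2 h3] sa(3)[OF h2 h3] PQ(2) ..
  then show ?thesis using mono_nz[OF nZ1 nZ2 S v] by simp
qed

end


lemma sref_apply: "sref i x = (if x = i then Suc i else if x = Suc i then i else x)"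
  unfolding sref_def Transposition.transpose_def by simp

lemma cox_Suc: "1 \<le> n \<Longrightarrow> cox (Suc n) = sref n \<circ> cox n"
  unfolding cox_def by (simp add: upt_Suc_append)

lemma cox_apply: "1 \<le> n \<Longrightarrow> cox n x = (if x = 1 then n else if 2 \<le> x \<and> x \<le> n then x - 1 else x)"
proof (induction n rule: dec_induct)
  case base
  then show ?case by (simp add: cox_def)
next
  case (step m)
  then show ?case by (auto simp: cox_Suc sref_apply)
qed

definition vv :: "nat \<Rightarrow> nat \<Rightarrow> nat \<Rightarrow> nat" where "vv n h = cox n \<circ> sref h"

lemma vv_apply: "1 \<le> n \<Longrightarrow> vv n h x = (let y = (if x = h then Suc h else if x = Suc h then h else x) in
   (if y = 1 then n else if 2 \<le> y \<and> y \<le> n then y - 1 else y))"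
  unfolding vv_def by (simp add: cox_apply sref_apply Let_def)

lemma img_gen:
  assumes n2: "2 \<le> n" and h: "1 \<le> h" "h \<le> n - 1" and c: "1 \<le> c" "c \<le> n - 1" "c \<noteq> h"
  shows "vv n h ` {1..c} = {1..<c} \<union> {n}"
proof (rule set_eqI, rule iffI)
  fix y assume "y \<in> vv n h ` {1..c}"
  then obtain x where x: "x \<in> {1..c}" "y = vv n h x" by auto
  then show "y \<in> {1..<c} \<union> {n}" using n2 h c by (auto simp: vv_apply Let_def)
next
  fix y assume y: "y \<in> {1..<c} \<union> {n}"
  show "y \<in> vv n h ` {1..c}"
  proof (cases "y = n")
    case True
    show ?thesis
    proof (cases "h = 1")
      case True
      then have "vv n h 2 = y" "2 \<in> {1..c}" using n2 c \<open>y = n\<close> by (auto simp: vv_apply)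
      then show ?thesis by (metis image_eqI)
    next
      case False
      then have "vv n h 1 = y" "1 \<in> {1..c}" using n2 c h \<open>y = n\<close> by (auto simp: vv_apply)
      then show ?thesis by (metis image_eqI)
    qed
  next
    case False
    then have y1: "1 \<le> y" "y < c" using y by auto
    show ?thesis
    proof (cases "y = h")
      case True
      then have "vv n h h = y" "h \<in> {1..c}" using n2 c h y1 by (auto simp: vv_apply)
      then show ?thesis by (metis image_eqI)
    next
      case False
      show ?thesis
      proof (cases "y + 1 = h")
        case True
        then have "vv n h (h + 1) = y" "h + 1 \<in> {1..c}" using n2 c h y1 by (auto simp: vv_apply)
        then show ?thesis by (metis image_eqI)
      next
        case False
        then have "vv n h (y + 1) = y" "y + 1 \<in> {1..c}" using n2 c h y1 \<open>y \<noteq> h\<close> by (auto simp: vv_apply)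
        then show ?thesis by (metis image_eqI)
      qed
    qed
  qed
qed

lemma img_h:
  assumes n2: "2 \<le> n" and h: "2 \<le> h" "h \<le> n - 1"
  shows "vv n h ` {1..h} = {1..<h-1} \<union> {h, n}"
proof (rule set_eqI, rule iffI)
  fix y assume "y \<in> vv n h ` {1..h}"
  then obtain x where x: "x \<in> {1..h}" "y = vv n h x" by auto
  then show "y \<in> {1..<h-1} \<union> {h, n}" using n2 h by (auto simp: vv_apply Let_def)
next
  fix y assume y: "y \<in> {1..<h-1} \<union> {h, n}"
  show "y \<in> vv n h ` {1..h}"
  proof (cases "y = n")
    case True
    then have "vv n h 1 = y" "1 \<in> {1..h}" using n2 h by (auto simp: vv_apply)
    then show ?thesis by (metis image_eqI)
  next
    case False
    show ?thesis
    proof (cases "y = h")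
      case True
      then have "vv n h h = y" "h \<in> {1..h}" using n2 h by (auto simp: vv_apply)
      then show ?thesis by (metis image_eqI)
    next
      case False
      then have y1: "1 \<le> y" "y + 1 < h" using y \<open>y \<noteq> n\<close> by auto
      then have "vv n h (y + 1) = y" "y + 1 \<in> {1..h}" using n2 h by (auto simp: vv_apply)
      then show ?thesis by (metis image_eqI)
    qed
  qed
qed

lemma img_1:
  assumes n2: "2 \<le> n"
  shows "vv n 1 ` {1..1} = {1}"
  using n2 by (auto simp: vv_apply)


lemma ss_ge: assumes "finite I" "\<forall>x\<in>I. 1 \<le> x" "r < card I"
  shows "r + 1 \<le> sorted_list_of_set I ! r"
  using assms(3)
proof (induction r)
  case 0
  then show ?case using ss_mem[OF assms(1)] assms(2) by fastforce
next
  case (Suc r)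
  then have "r + 1 \<le> sorted_list_of_set I ! r" by simp
  moreover have "sorted_list_of_set I ! r < sorted_list_of_set I ! Suc r"
    using ss_less[OF assms(1)] Suc.prems by simp
  ultimately show ?case by simp
qed

lemma ss_le: assumes fin: "finite I" and r: "r < card I" and cr: "r < card {x\<in>I. x \<le> t}"
  shows "sorted_list_of_set I ! r \<le> t"
proof (rule ccontr)
  assume "\<not> sorted_list_of_set I ! r \<le> t"
  then have gt: "t < sorted_list_of_set I ! r" by simp
  have "{x\<in>I. x \<le> t} \<subseteq> (\<lambda>i. sorted_list_of_set I ! i) ` {0..<r}"
  proof
    fix x assume x: "x \<in> {x\<in>I. x \<le> t}"
    then obtain i where i: "i < card I" "sorted_list_of_set I ! i = x" using ss_surj[OF fin] by blast
    have "i < r"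
    proof (rule ccontr)
      assume "\<not> i < r"
      then have "sorted_list_of_set I ! r \<le> sorted_list_of_set I ! i"
        using ss_less[OF fin, of r i] i(1) by (cases "r = i") auto
      then show False using gt x i by auto
    qed
    then show "x \<in> (\<lambda>i. sorted_list_of_set I ! i) ` {0..<r}" using i by auto
  qed
  then have "card {x\<in>I. x \<le> t} \<le> card ((\<lambda>i. sorted_list_of_set I ! i) ` {0..<r})"
    by (rule card_mono[rotated]) simp
  also have "\<dots> \<le> r" using card_image_le[of "{0..<r}"] by simp
  finally show False using cr by simp
qed

lemma ss_exact: assumes "finite I" "\<forall>x\<in>I. 1 \<le> x" "r < card I" "sorted_list_of_set I ! r \<le> r + 1"
  shows "r + 1 \<in> I"
proof -
  have "sorted_list_of_set I ! r = r + 1" using ss_ge[OF assms(1-3)] assms(4) by simp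
  then show ?thesis using ss_mem[OF assms(1,3)] by simp
qed

lemma ss_init: assumes "finite I" "{1..<m} \<subseteq> I" "r + 1 < m" "r < card I"
  shows "sorted_list_of_set I ! r \<le> r + 1"
proof (rule ss_le[OF assms(1,4)])
  have "{1..r+1} \<subseteq> {x\<in>I. x \<le> r + 1}" using assms(2,3) by auto
  then have "card {1..r+1} \<le> card {x\<in>I. x \<le> r + 1}" by (rule card_mono[rotated]) (use assms(1) in simp)
  then show "r < card {x\<in>I. x \<le> r + 1}" by simp
qed

lemma ss_last: assumes "finite I" "I \<subseteq> {1..n}" "r < card I" shows "sorted_list_of_set I ! r \<le> n"
  using ss_mem[OF assms(1,3)] assms(2) by auto

lemma alw_iff:
  assumes n2: "2 \<le> n" and h: "1 \<le> h" "h \<le> n - 1" and I: "I \<subseteq> {1..n}" "card I = c"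
    and c: "1 \<le> c" "c \<le> n - 1"
  shows "gale_le I (vv n h ` {1..c}) \<longleftrightarrow>
    (if c = h then {1..<h-1} \<subseteq> I \<and> (h - 1 \<in> I \<or> h \<in> I) else {1..<c} \<subseteq> I)"
proof -
  have fin: "finite I" using I(1) finite_subset by blast
  have pos: "\<forall>x\<in>I. 1 \<le> x" using I(1) by auto
  show ?thesis
  proof (cases "c = h")
    case False
    have V: "vv n h ` {1..c} = {1..<c} \<union> {n}" using img_gen[OF n2 h c False] .
    have sV: "sorted_list_of_set ({1..<c} \<union> {n}) = [1..<c] @ [n]"
    proof -
      have "set ([1..<c] @ [n]) = {1..<c} \<union> {n}" by auto
      moreover have "sorted_wrt (<) ([1..<c] @ [n])" using c by (auto simp: sorted_wrt_append)
      ultimately show ?thesis by (metis sorted_list_of_set.idem_if_sorted_distinct strict_sorted_iff)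
    qed
    have cV: "card ({1..<c} \<union> {n}) = c" using c by (auto simp: card_insert_if)
    have nth: "([1..<c] @ [n]) ! r = (if r < c - 1 then r + 1 else n)" if "r < c" for r
      using that c by (auto simp: nth_append)
    have "gale_le I (vv n h ` {1..c}) \<longleftrightarrow> (\<forall>r<c. sorted_list_of_set I ! r \<le> (if r < c - 1 then r + 1 else n))"
      unfolding gale_le_def V sV cV I(2) using nth by auto
    also have "\<dots> \<longleftrightarrow> {1..<c} \<subseteq> I"
    proof
      assume a: "\<forall>r<c. sorted_list_of_set I ! r \<le> (if r < c - 1 then r + 1 else n)"
      show "{1..<c} \<subseteq> I"
      proof
        fix j assume j: "j \<in> {1..<c}"
        then have jj: "j - 1 < c - 1" "j - 1 < c" by auto
        then have "sorted_list_of_set I ! (j - 1) \<le> (j - 1) + 1" using a[rule_format, of "j - 1"] by presburger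
        then have "(j - 1) + 1 \<in> I" using ss_exact[OF fin pos, of "j - 1"] jj I(2) by auto
        then show "j \<in> I" using j by auto
      qed
    next
      assume a: "{1..<c} \<subseteq> I"
      show "\<forall>r<c. sorted_list_of_set I ! r \<le> (if r < c - 1 then r + 1 else n)"
        using ss_init[OF fin a] ss_last[OF fin I(1)] I(2) by auto
    qed
    finally show ?thesis using False by simp
  next
    case True
    show ?thesis
    proof (cases "h = 1")
      case True
      then have c1: "c = 1" using \<open>c = h\<close> by simp
      have V: "vv n h ` {1..c} = {1}" using img_1[OF n2] True c1 by simp
      have v1: "vv n h (Suc 0) = Suc 0" using n2 True by (simp add: vv_apply)
      have "gale_le I (vv n h ` {1..c}) \<longleftrightarrow> sorted_list_of_set I ! 0 \<le> 1"
        by (simp add: gale_le_def I(2) c1 v1)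
      also have "\<dots> \<longleftrightarrow> 1 \<in> I"
      proof
        assume "sorted_list_of_set I ! 0 \<le> 1"
        then show "1 \<in> I" using ss_exact[OF fin pos, of 0] I(2) c1 by simp
      next
        assume "1 \<in> I"
        moreover have "{1..<2::nat} = {1}" by (auto simp: less_Suc_eq)
        ultimately have "{1..<2} \<subseteq> I" by simp
        then show "sorted_list_of_set I ! 0 \<le> 1" using ss_init[OF fin, of 2 0] I(2) c1 by simp
      qed
      finally show ?thesis using True \<open>c = h\<close> pos by auto
    next
      case False
      then have h2: "2 \<le> h" using h by simp
      have V: "vv n h ` {1..h} = {1..<h-1} \<union> {h, n}" using img_h[OF n2 h2 h(2)] by simp
      have sV: "sorted_list_of_set ({1..<h-1} \<union> {h, n}) = [1..<h-1] @ [h, n]"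
      proof -
        have "set ([1..<h-1] @ [h, n]) = {1..<h-1} \<union> {h, n}" by auto
        moreover have "sorted_wrt (<) ([1..<h-1] @ [h, n])" using h by (auto simp: sorted_wrt_append)
        ultimately show ?thesis by (metis sorted_list_of_set.idem_if_sorted_distinct strict_sorted_iff)
      qed
      have cV: "card ({1..<h-1} \<union> {h, n}) = h" using h h2 by (auto simp: card_insert_if)
      have nth: "([1..<h-1] @ [h, n]) ! r = (if r < h - 2 then r + 1 else if r = h - 2 then h else n)" if "r < h" for r
        using that h2 by (auto simp: nth_append nth_Cons split: nat.splits)
      have "gale_le I (vv n h ` {1..c}) \<longleftrightarrow>
          (\<forall>r<h. sorted_list_of_set I ! r \<le> (if r < h - 2 then r + 1 else if r = h - 2 then h else n))"
        unfolding gale_le_def V sV cV I(2) \<open>c = h\<close> using nth by auto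
      also have "\<dots> \<longleftrightarrow> {1..<h-1} \<subseteq> I \<and> (h - 1 \<in> I \<or> h \<in> I)"
      proof
        assume a: "\<forall>r<h. sorted_list_of_set I ! r \<le> (if r < h - 2 then r + 1 else if r = h - 2 then h else n)"
        have "{1..<h-1} \<subseteq> I"
        proof
          fix j assume j: "j \<in> {1..<h-1}"
          then have jj: "j - 1 < h - 2" "j - 1 < h" by auto
          then have "sorted_list_of_set I ! (j - 1) \<le> (j - 1) + 1" using a[rule_format, of "j - 1"] by presburger
          then have "(j - 1) + 1 \<in> I" using ss_exact[OF fin pos, of "j - 1"] j I(2) \<open>c = h\<close> by auto
          then show "j \<in> I" using j by auto
        qed
        moreover have "h - 1 \<in> I \<or> h \<in> I"
        proof -
          have r: "h - 2 < card I" using I(2) \<open>c = h\<close> h2 by simp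
          have "sorted_list_of_set I ! (h - 2) \<le> h" using a[rule_format, of "h - 2"] h2 by auto
          moreover have "h - 2 + 1 \<le> sorted_list_of_set I ! (h - 2)" using ss_ge[OF fin pos r] .
          moreover have "sorted_list_of_set I ! (h - 2) \<in> I" using ss_mem[OF fin r] .
          ultimately have "sorted_list_of_set I ! (h - 2) = h - 1 \<or> sorted_list_of_set I ! (h - 2) = h"
            "sorted_list_of_set I ! (h - 2) \<in> I" using h2 by linarith+
          then show ?thesis by auto
        qed
        ultimately show "{1..<h-1} \<subseteq> I \<and> (h - 1 \<in> I \<or> h \<in> I)" by simp
      next
        assume a: "{1..<h-1} \<subseteq> I \<and> (h - 1 \<in> I \<or> h \<in> I)"
        show "\<forall>r<h. sorted_list_of_set I ! r \<le> (if r < h - 2 then r + 1 else if r = h - 2 then h else n)"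
        proof (intro allI impI)
          fix r assume r: "r < h"
          have rI: "r < card I" using r I(2) \<open>c = h\<close> by simp
          show "sorted_list_of_set I ! r \<le> (if r < h - 2 then r + 1 else if r = h - 2 then h else n)"
          proof (cases "r < h - 2")
            case True
            then show ?thesis using ss_init[OF fin conjunct1[OF a] _ rI] by simp
          next
            case False
            show ?thesis
            proof (cases "r = h - 2")
              case True
              have "{1..<h-1} \<union> ({h-1, h} \<inter> I) \<subseteq> {x\<in>I. x \<le> h}" using a by auto
              then have "card ({1..<h-1} \<union> ({h-1, h} \<inter> I)) \<le> card {x\<in>I. x \<le> h}"
                by (rule card_mono[rotated]) (use fin in simp)
              moreover have "card ({1..<h-1} \<union> ({h-1, h} \<inter> I)) \<ge> h - 1"
              proof -
                obtain b where b: "b \<in> {h-1, h} \<inter> I" using a by auto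
                have "{1..<h-1} \<union> {b} \<subseteq> {1..<h-1} \<union> ({h-1, h} \<inter> I)" using b by auto
                then have "card ({1..<h-1} \<union> {b}) \<le> card ({1..<h-1} \<union> ({h-1, h} \<inter> I))"
                  by (rule card_mono[rotated]) simp
                moreover have "card ({1..<h-1} \<union> {b}) = h - 1" using b h2 by auto
                ultimately show ?thesis by simp
              qed
              ultimately have "r < card {x\<in>I. x \<le> h}" using True h2 by simp
              then show ?thesis using ss_le[OF fin rI] True by simp
            next
              case False
              then show ?thesis using ss_last[OF fin I(1) rI] \<open>\<not> r < h - 2\<close> by simp
            qed
          qed
        qed
      qed
      finally show ?thesis using \<open>c = h\<close> by simp
    qed
  qed
qed


definition alw :: "nat \<Rightarrow> nat \<Rightarrow> nat set \<Rightarrow> bool" where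
  "alw h c I = (if c = h then {1..<h-1} \<subseteq> I \<and> (h - 1 \<in> I \<or> h \<in> I) else {1..<c} \<subseteq> I)"

lemma card_diff_le: "finite X \<Longrightarrow> C \<subseteq> X \<Longrightarrow> C \<subseteq> Y \<Longrightarrow> card (X - Y) \<le> card X - card C"
proof -
  assume a: "finite X" "C \<subseteq> X" "C \<subseteq> Y"
  have "card (X - Y) \<le> card (X - C)" using a by (intro card_mono) auto
  also have "\<dots> = card X - card C" using a by (simp add: card_Diff_subset finite_subset)
  finally show ?thesis .
qed

lemma card_le1: assumes "finite A" "card A \<le> 1" "x \<in> A" shows "A = {x}"
proof -
  have "card A \<noteq> 0" using assms by auto
  then have "card A = card {x}" using assms(2) by simp
  moreover have "{x} \<subseteq> A" using assms(3) by simp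
  ultimately show ?thesis using card_subset_eq[OF assms(1)] by metis
qed

lemma swap_caseA:
  fixes X0 Y0 P Q SL :: "nat set"
  assumes fX: "finite X0" and fY: "finite Y0" and cX: "card X0 = e" and cY: "card Y0 = d"
    and ed: "e < d" and e1: "1 \<le> e" and X0n: "X0 \<subseteq> {1..n}" and Y0n: "Y0 \<subseteq> {1..n}"
    and aX: "alw h e X0" and aY: "alw h d Y0"
    and QX: "Q \<subseteq> X0" and cXY: "card (X0 - Y0) = card (P - SL) + card (Q - SL)"
    and QY: "Q \<inter> SL \<subseteq> Y0" and pP: "P - SL \<noteq> {}" and fP: "finite P" and fQ: "finite Q"
  shows "\<exists>x y. x \<in> X0 - Y0 \<and> y \<in> Y0 - X0 \<and> x \<notin> Q \<and> card (P - SL) = 1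
     \<and> alw h e (insert y (X0 - {x})) \<and> alw h d (insert x (Y0 - {y})) \<and> d \<le> y"
proof -
  have pos: "card (P - SL) \<ge> 1" using pP fP by (simp add: Suc_leI card_gt_0_iff)
  obtain C where C: "C \<subseteq> X0" "C \<subseteq> Y0" "e - 1 \<le> card C" "\<forall>c\<in>C. c < d"
  proof (cases "e = h")
    case True
    then obtain b where b: "b \<in> X0" "b = h - 1 \<or> b = h" using aX unfolding alw_def by auto
    have X1: "{1..<h-1} \<subseteq> X0" using aX True unfolding alw_def by simp
    have dh: "d \<noteq> h" using True ed by simp
    have Y1: "{1..<d} \<subseteq> Y0" using aY dh unfolding alw_def by simp
    have b1: "1 \<le> b" using b X0n by auto
    let ?C = "{1..<h-1} \<union> {b}"
    have "?C \<subseteq> X0" using X1 b by auto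
    moreover have "?C \<subseteq> Y0"
    proof -
      have "?C \<subseteq> {1..<d}" using b b1 True ed by auto
      then show ?thesis using Y1 by (rule subset_trans)
    qed
    moreover have "e - 1 \<le> card ?C" using b True by (auto simp: card_insert_if)
    moreover have "\<forall>c\<in>?C. c < d" using b True ed by auto
    ultimately show ?thesis using that by blast
  next
    case False
    have X1: "{1..<e} \<subseteq> X0" using aX False unfolding alw_def by simp
    have Y1: "{1..<e} \<subseteq> Y0"
    proof (cases "d = h")
      case True
      have "{1..<e} \<subseteq> {1..<h-1}" using True ed by auto
      moreover have "{1..<h-1} \<subseteq> Y0" using aY True unfolding alw_def by auto
      ultimately show ?thesis by (rule subset_trans)
    next
      case False
      then show ?thesis using aY ed unfolding alw_def by auto
    qed
    show ?thesis using that[of "{1..<e}"] X1 Y1 ed by auto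
  qed
  have "card (X0 - Y0) \<le> 1" using card_diff_le[OF fX C(1,2)] C(3) cX by simp
  then have cP: "card (P - SL) = 1" and cQ: "card (Q - SL) = 0" using cXY pos by auto
  have QSL: "Q \<subseteq> SL" using cQ fQ by auto
  have "card (X0 - Y0) \<noteq> 0" using cXY cP by simp
  then have "X0 - Y0 \<noteq> {}" by (metis card.empty)
  then obtain x where x: "x \<in> X0 - Y0" by blast
  have Xx: "X0 - Y0 = {x}" using card_le1[of "X0 - Y0" x] fX x \<open>card (X0 - Y0) \<le> 1\<close> by simp
  have xQ: "x \<notin> Q" using x QSL QY by auto
  have CX: "C \<subseteq> X0 - {x}" using C x by auto
  have cXx: "card (X0 - {x}) = e - 1" using x cX fX by simp
  have finC: "finite C" using C(1) fX finite_subset by blast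
  show ?thesis
  proof (cases "d = h")
    case False
    have Y1: "{1..<d} \<subseteq> Y0" using aY False unfolding alw_def by simp
    have "card (Y0 - {1..<d}) = 1" using cY Y1 fY ed e1 by (simp add: card_Diff_subset)
    then obtain y where y: "Y0 - {1..<d} = {y}" using card_1_singletonE by blast
    have "y \<in> Y0" "y \<notin> {1..<d}" using y by auto
    then have yd: "d \<le> y" using Y0n by auto
    have xd: "x \<notin> {1..<d}" using x Y1 by auto
    have yX: "y \<notin> X0"
    proof
      assume yX: "y \<in> X0"
      have "C \<union> {x, y} \<subseteq> X0" using C(1) x yX by auto
      then have "card (C \<union> {x, y}) \<le> e" using cX fX card_mono by metis
      moreover have "card (C \<union> {x, y}) = card C + 2"
      proof -
        have "x \<notin> C" "y \<notin> C" "x \<noteq> y" using C(2) C(4) xd yd y x by auto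
        then show ?thesis using finC by (simp add: card_insert_if)
      qed
      ultimately show False using C(3) e1 by simp
    qed
    have yY: "y \<in> Y0 - X0" using y yX by auto
    have aX1: "alw h e (insert y (X0 - {x}))"
    proof (cases "e = h")
      case True
      have xx: "x \<notin> {1..<h-1}" "x \<noteq> h - 1" "x \<noteq> h" using xd True ed e1 x X0n by auto
      have "{1..<h-1} \<subseteq> X0" "h - 1 \<in> X0 \<or> h \<in> X0" using aX True unfolding alw_def by auto
      then have "{1..<h-1} \<subseteq> insert y (X0 - {x})" "h - 1 \<in> insert y (X0 - {x}) \<or> h \<in> insert y (X0 - {x})"
        using xx by auto
      then show ?thesis using True unfolding alw_def by simp
    next
      case False
      have "x \<notin> {1..<e}" using xd ed by auto
      then show ?thesis using aX False unfolding alw_def by auto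
    qed
    have aY1: "alw h d (insert x (Y0 - {y}))"
    proof -
      have "y \<notin> {1..<d}" using yd by auto
      then show ?thesis using Y1 False unfolding alw_def by auto
    qed
    show ?thesis apply (rule exI[of _ x], rule exI[of _ y]) using x yY xQ cP aX1 aY1 yd by simp
  next
    case True
    have dh: "e \<noteq> h" using True ed by simp
    have X1: "{1..<e} \<subseteq> X0" using aX dh unfolding alw_def by simp
    have Y1: "{1..<h-1} \<subseteq> Y0" and Yb: "h - 1 \<in> Y0 \<or> h \<in> Y0" using aY True unfolding alw_def by auto
    have "{1..<e} \<subseteq> {1..<h-1}" using True ed by auto
    then have eY: "{1..<e} \<subseteq> Y0" using Y1 by (rule subset_trans)
    have Xe: "X0 - {x} = {1..<e}"
    proof -
      have "{1..<e} \<subseteq> X0 - {x}" using X1 eY x by auto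
      moreover have "card {1..<e} = card (X0 - {x})" using cXx by simp
      ultimately show ?thesis using card_subset_eq[of "X0 - {x}" "{1..<e}"] fX by simp
    qed
    have neY: "Y0 \<noteq> {}" using cY ed by auto
    define y where "y = Max Y0"
    have yY0: "y \<in> Y0" unfolding y_def using Max_in[OF fY neY] .
    have ymax: "\<forall>z\<in>Y0. z \<le> y" unfolding y_def using Max_ge[OF fY] by auto
    have yd: "d \<le> y"
    proof -
      have "Y0 \<subseteq> {1..y}" using ymax Y0n by auto
      then have "card Y0 \<le> card {1..y}" by (intro card_mono) auto
      then show ?thesis using cY by simp
    qed
    have yX: "y \<notin> X0"
    proof
      assume "y \<in> X0"
      moreover have "y \<noteq> x" using x yY0 by auto
      ultimately have "y \<in> X0 - {x}" by simp
      then have "y \<in> {1..<e}" unfolding Xe .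
      then show False using yd ed by simp
    qed
    have "{1..<e} \<subseteq> insert y (X0 - {x})" unfolding Xe by (rule subset_insertI)
    then have aX1: "alw h e (insert y (X0 - {x}))" using dh unfolding alw_def by simp
    have aY1: "alw h d (insert x (Y0 - {y}))"
    proof -
      have "{1..<h-1} \<subseteq> insert x (Y0 - {y})" using Y1 yd True by auto
      moreover have "h - 1 \<in> insert x (Y0 - {y}) \<or> h \<in> insert x (Y0 - {y})"
      proof (cases "h - 1 \<in> Y0 \<and> h - 1 \<noteq> y")
        case True
        then show ?thesis by auto
      next
        case False
        show ?thesis
        proof (cases "h \<in> Y0 \<and> h \<noteq> y")
          case True
          then show ?thesis by auto
        next
          case False2: False
          have "h - 1 < y" using yd True ed by auto
          then have "h - 1 \<notin> Y0" using False by auto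
          then have hY: "h \<in> Y0" "h = y" using Yb False2 by auto
          have "Y0 \<subseteq> {1..h}" using ymax Y0n hY by auto
          then have "Y0 = {1..h}" using card_subset_eq[of "{1..h}" Y0] cY True by simp
          then have "h - 1 \<in> Y0" using True ed e1 by auto
          then show ?thesis using \<open>h - 1 \<notin> Y0\<close> by simp
        qed
      qed
      ultimately show ?thesis using True unfolding alw_def by simp
    qed
    show ?thesis apply (rule exI[of _ x], rule exI[of _ y]) using x yY0 yX xQ cP aX1 aY1 yd by simp
  qed
qed


lemma two_elem: assumes "finite A" "card A = 2" "q \<in> A" shows "\<exists>x\<in>A. x \<noteq> q"
proof (rule ccontr)
  assume "\<not> (\<exists>x\<in>A. x \<noteq> q)"
  then have "A \<subseteq> {q}" by auto
  then have "card A \<le> 1" using card_mono[of "{q}" A] by simp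
  then show False using assms(2) by simp
qed

lemma swap_caseB:
  fixes X0 Y0 P Q SL :: "nat set"
  assumes fX: "finite X0" and fY: "finite Y0" and cX: "card X0 = e" and cY: "card Y0 = e"
    and e1: "1 \<le> e" and X0n: "X0 \<subseteq> {1..n}" and Y0n: "Y0 \<subseteq> {1..n}"
    and aX: "alw h e X0" and aY: "alw h e Y0"
    and QX: "Q \<subseteq> X0" and cXY: "card (X0 - Y0) = card (P - SL) + card (Q - SL)"
    and QY: "Q \<inter> SL \<subseteq> Y0" and XYSL: "X0 \<inter> Y0 \<subseteq> SL"
    and pP: "P - SL \<noteq> {}" and qQ: "Q - SL \<noteq> {}" and fP: "finite P" and fQ: "finite Q"
  shows "\<exists>x y. x \<in> X0 - Y0 \<and> y \<in> Y0 - X0 \<and> x \<notin> Q \<and> card (P - SL) = 1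
     \<and> alw h e (insert y (X0 - {x})) \<and> alw h e (insert x (Y0 - {y})) \<and> 2 \<le> card (X0 - Y0)"
proof -
  have pos1: "card (P - SL) \<ge> 1" using pP fP by (simp add: Suc_leI card_gt_0_iff)
  have pos2: "card (Q - SL) \<ge> 1" using qQ fQ by (simp add: Suc_leI card_gt_0_iff)
  have ge2: "2 \<le> card (X0 - Y0)" using cXY pos1 pos2 by simp
  have eh: "e = h"
  proof (rule ccontr)
    assume "e \<noteq> h"
    then have "{1..<e} \<subseteq> X0" "{1..<e} \<subseteq> Y0" using aX aY unfolding alw_def by auto
    then have "card (X0 - Y0) \<le> card X0 - card {1..<e}" by (rule card_diff_le[OF fX])
    then show False using ge2 cX by simp
  qed
  define C0 where "C0 = {1..<h-1}"
  have C0X: "C0 \<subseteq> X0" and C0Y: "C0 \<subseteq> Y0" and bX: "h - 1 \<in> X0 \<or> h \<in> X0"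
    and bY: "h - 1 \<in> Y0 \<or> h \<in> Y0"
    using aX aY eh unfolding alw_def C0_def by auto
  have cC0: "card C0 = h - 2" unfolding C0_def by simp
  have le2: "card (X0 - Y0) \<le> card X0 - card C0" by (rule card_diff_le[OF fX C0X C0Y])
  have h2: "2 \<le> h" using le2 ge2 cX eh cC0 by simp
  have c2: "card (X0 - Y0) = 2" using le2 ge2 cX eh cC0 by simp
  have cP: "card (P - SL) = 1" and cQ: "card (Q - SL) = 1" using c2 cXY pos1 pos2 by auto
  have fin2: "finite (X0 - C0)" using fX by simp
  have XC: "X0 - Y0 = X0 - C0"
  proof -
    have "X0 - Y0 \<subseteq> X0 - C0" using C0Y by auto
    moreover have "card (X0 - C0) = 2" using cX eh cC0 C0X fX h2 by (simp add: card_Diff_subset finite_subset)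
    ultimately show ?thesis using card_subset_eq[OF fin2] c2 by simp
  qed
  have YC: "Y0 - X0 = Y0 - C0"
  proof -
    have fin3: "finite (Y0 - C0)" using fY by simp
    have "Y0 - X0 \<subseteq> Y0 - C0" using C0X by auto
    moreover have "card (Y0 - C0) = 2" using cY eh cC0 C0Y fY h2 by (simp add: card_Diff_subset finite_subset)
    moreover have "card (Y0 - X0) = 2"
    proof -
      have "card (Y0 - X0) = card Y0 - card (Y0 \<inter> X0)" using fY by (simp add: card_Diff_subset_Int)
      moreover have "card (X0 - Y0) = card X0 - card (X0 \<inter> Y0)" using fX by (simp add: card_Diff_subset_Int)
      ultimately show ?thesis using c2 cX cY by (simp add: Int_commute)
    qed
    ultimately show ?thesis using card_subset_eq[OF fin3] by simp
  qed
  obtain q where q: "q \<in> Q - SL" using qQ by auto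
  have qXY: "q \<in> X0 - Y0" using q QX XYSL by auto
  obtain x where x: "x \<in> X0 - Y0" "x \<noteq> q" using two_elem[OF _ c2 qXY] fX by auto
  have xQ: "x \<notin> Q"
  proof
    assume xq: "x \<in> Q"
    then have "x \<in> Q - SL" using x QY by auto
    moreover have "finite (Q - SL)" using fQ by simp
    ultimately have "Q - SL = {x}" using card_le1[of "Q - SL" x] cQ by simp
    then show False using q x by auto
  qed
  obtain c0 where c0: "c0 \<in> X0" "c0 = h - 1 \<or> c0 = h" using bX by auto
  obtain c1 where c1: "c1 \<in> Y0" "c1 = h - 1 \<or> c1 = h" using bY by auto
  have c0nC: "c0 \<notin> C0" "c1 \<notin> C0" using c0 c1 unfolding C0_def by auto
  have c0Y: "c0 \<notin> Y0" using XC c0 c0nC by auto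
  have c1X: "c1 \<notin> X0" using YC c1 c0nC by auto
  have xC: "x \<notin> C0" using x C0Y by auto
  show ?thesis
  proof (cases "x = h - 1 \<or> x = h")
    case True
    have yY: "c1 \<in> Y0 - X0" using c1 c1X by simp
    have "c1 \<notin> C0" using c0nC by simp
    have aX1: "alw h e (insert c1 (X0 - {x}))"
    proof -
      have "C0 \<subseteq> insert c1 (X0 - {x})" using C0X xC by auto
      then show ?thesis using eh c1 unfolding alw_def C0_def by auto
    qed
    have aY1: "alw h e (insert x (Y0 - {c1}))"
    proof -
      have "C0 \<subseteq> insert x (Y0 - {c1})" using C0Y c0nC by auto
      then show ?thesis using eh True unfolding alw_def C0_def by auto
    qed
    show ?thesis apply (rule exI[of _ x], rule exI[of _ c1]) using x yY xQ cP aX1 aY1 c2 by simp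
  next
    case False
    have c1YX: "c1 \<in> Y0 - X0" using c1 c1X by simp
    have fYX: "finite (Y0 - X0)" using fY by simp
    have cYX: "card (Y0 - X0) = 2"
      using YC cY eh cC0 C0Y fY h2 by (simp add: card_Diff_subset finite_subset)
    obtain y where y: "y \<in> Y0 - X0" "y \<noteq> c1" using two_elem[OF fYX cYX c1YX] by auto
    have yc0: "y \<noteq> c0" using y c0 by auto
    have ynot: "y \<noteq> h - 1" "y \<noteq> h" using y(2) yc0 c0(2) c1(2) c0Y c1X y(1) c0(1) c1(1) by auto
    have yC: "y \<notin> C0" using y C0X by auto
    have aX1: "alw h e (insert y (X0 - {x}))"
    proof -
      have "C0 \<subseteq> insert y (X0 - {x})" using C0X xC by auto
      moreover have "c0 \<in> insert y (X0 - {x})" using c0 False by auto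
      ultimately show ?thesis using eh c0(2) unfolding alw_def C0_def by auto
    qed
    have aY1: "alw h e (insert x (Y0 - {y}))"
    proof -
      have "C0 \<subseteq> insert x (Y0 - {y})" using C0Y yC by auto
      moreover have "c1 \<in> insert x (Y0 - {y})" using c1 y by auto
      ultimately show ?thesis using eh c1(2) unfolding alw_def C0_def by auto
    qed
    show ?thesis apply (rule exI[of _ x], rule exI[of _ y]) using x y xQ cP aX1 aY1 c2 by simp
  qed
qed


lemma filter_insert: "{a \<in> insert y A. p a} = (if p y then insert y {a\<in>A. p a} else {a\<in>A. p a})"
  by auto

lemma swap_weight:
  assumes "finite Z" "x \<in> Z" "y \<notin> Z"
  shows "card {a \<in> insert y (Z - {x}). p a} + (if p x then 1 else 0) = card {a\<in>Z. p a} + (if p y then 1 else 0)"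
proof -
  have Z: "Z = insert x (Z - {x})" using assms(2) by auto
  have f: "finite {a\<in>Z - {x}. p a}" using assms(1) by simp
  have yn: "y \<notin> {a\<in>Z - {x}. p a}" "x \<notin> {a\<in>Z - {x}. p a}" using assms(3) by auto
  have "card {a\<in>Z. p a} = card {a \<in> insert x (Z - {x}). p a}" using Z by simp
  then show ?thesis unfolding filter_insert using f yn assms(3) by (simp add: card_insert_if)
qed

lemma wmono_pair: "wmono n {#X, Y#} = wI n X + wI n Y"
  unfolding wmono_def by simp

lemma quot_in_w_iff:
  "quot_v v (in_w n f) m \<noteq> 0 \<longleftrightarrow> f m \<noteq> 0 \<and> (\<forall>m'. f m' \<noteq> 0 \<longrightarrow> wmono n m \<le> wmono n m')
     \<and> (\<forall>I\<in>#m. gale_le I (v ` {1..card I}))"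
  unfolding quot_v_def in_w_def by auto

lemma setalg5:
  fixes X0 Y0 D W :: "nat set"
  assumes "X0 \<inter> Y0 = D" "X0 \<union> Y0 = W" "x \<in> X0 - Y0" "y \<in> Y0 - X0"
  shows "insert x (Y0 - {y}) = (W - insert y (X0 - {x})) \<union> D" "D \<subseteq> insert y (X0 - {x})"
    "insert y (X0 - {x}) \<subseteq> W"
  using assms by auto


theorem proposition4p7:
  fixes n h k :: nat and J L :: "nat list"
  assumes "n \<ge> 2" and "h \<in> {1..n-1}"
    and "distinct J" and "distinct L"
    and "set J \<subseteq> {1..n}" and "set L \<subseteq> {1..n}"
    and "1 \<le> length J" and "length J \<le> length L" and "length L \<le> n - 1"
    and "k \<in> {1..length J}"
  shows "\<not> degenerates_to_monomial n (cox n \<circ> sref h) (plucker_rel J L k)"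
proof
  assume deg: "degenerates_to_monomial n (cox n \<circ> sref h) (plucker_rel J L k)"
  note n2 = assms(1)
  have h1: "1 \<le> h" "h \<le> n - 1" using assms(2) by auto
  interpret pl J L k using assms(3,4,8,10) by unfold_locales auto
  let ?v = "cox n \<circ> sref h"
  have vv: "?v = vv n h" unfolding vv_def ..
  let ?e = "length J" and ?d = "length L"
  let ?D = "SJ \<inter> SL" and ?W = "SJ \<union> SL"
  obtain m0 where m0: "quot_v ?v (in_w n R) m0 \<noteq> 0"
    and uniq: "\<And>m. quot_v ?v (in_w n R) m \<noteq> 0 \<Longrightarrow> m = m0"
    using deg unfolding degenerates_to_monomial_def by blast
  have Rm0: "R m0 \<noteq> 0" and minw: "\<And>m'. R m' \<noteq> 0 \<Longrightarrow> wmono n m0 \<le> wmono n m'"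
    and gal: "\<forall>I\<in>#m0. gale_le I (?v ` {1..card I})"
    using m0 unfolding quot_in_w_iff by auto
  have nZ1: "\<not> P \<subseteq> SL" using Z1 Rm0 by blast
  have nZ2: "\<not> (?e = ?d \<and> Q \<subseteq> SL)" using Z2 Rm0 by blast
  obtain X0 Y0 where m0XY: "m0 = {#X0, Y0#}" and cX: "card X0 = ?e" and cY: "card Y0 = ?d"
    and XY: "X0 \<inter> Y0 = ?D" and XUY: "X0 \<union> Y0 = ?W" and QX: "Q \<subseteq> X0"
    using N[OF Rm0] by blast
  have Wn: "?W \<subseteq> {1..n}" using assms(5,6) by simp
  have X0n: "X0 \<subseteq> {1..n}" and Y0n: "Y0 \<subseteq> {1..n}" using XUY Wn by auto
  have fX: "finite X0" and fY: "finite Y0" using X0n Y0n finite_subset by auto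
  have e1: "1 \<le> ?e" "?e \<le> n - 1" using assms(7,8,9) by auto
  have d1: "1 \<le> ?d" "?d \<le> n - 1" using assms(7,8,9) by auto
  have alwI: "gale_le I (?v ` {1..card I}) \<longleftrightarrow> alw h c I" if "I \<subseteq> {1..n}" "card I = c" "1 \<le> c" "c \<le> n - 1" for I c
    unfolding vv alw_def using alw_iff[OF n2 h1 that] that(2) by simp
  have aX: "alw h ?e X0" using gal m0XY alwI[OF X0n cX e1] by simp
  have aY: "alw h ?d Y0" using gal m0XY alwI[OF Y0n cY d1] by simp
  have pP: "P - SL \<noteq> {}" using nZ1 by auto
  have QY: "Q \<inter> SL \<subseteq> Y0" using XY PQ(2) by auto
  have XYSL: "X0 \<inter> Y0 \<subseteq> SL" using XY by auto
  have cXY: "card (X0 - Y0) = card (P - SL) + card (Q - SL)"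
  proof -
    have "card (X0 - Y0) = card X0 - card (X0 \<inter> Y0)" using fX by (simp add: card_Diff_subset_Int)
    also have "\<dots> = card SJ - card (SJ \<inter> SL)" using cX cardJ XY by simp
    also have "\<dots> = card (SJ - SL)" by (simp add: card_Diff_subset_Int)
    also have "SJ - SL = (P - SL) \<union> (Q - SL)" using PQ(2) by auto
    also have "card \<dots> = card (P - SL) + card (Q - SL)" using PQ(1) by (intro card_Un_disjoint) auto
    finally show ?thesis .
  qed
  obtain x y where x: "x \<in> X0 - Y0" and y: "y \<in> Y0 - X0" and xQ: "x \<notin> Q" and cP: "card (P - SL) = 1"
    and aX1: "alw h ?e (insert y (X0 - {x}))" and aY1: "alw h ?d (insert x (Y0 - {y}))"
    and wcond: "?e = ?d \<or> ?d \<le> y" and ncond: "?e < ?d \<or> 2 \<le> card (X0 - Y0)"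
  proof (cases "?e < ?d")
    case True
    then show ?thesis using swap_caseA[OF fX fY cX cY True e1(1) X0n Y0n aX aY QX cXY QY pP] that by auto
  next
    case False
    then have ed: "?e = ?d" using assms(8) by simp
    have qQ: "Q - SL \<noteq> {}" using nZ2 ed by auto
    show ?thesis using swap_caseB[OF fX fY cX cY[folded ed] e1(1) X0n Y0n aX aY[folded ed] QX cXY QY XYSL pP qQ]
      that ed by auto
  qed
  define X1 where "X1 = insert y (X0 - {x})"
  define Y1 where "Y1 = insert x (Y0 - {y})"
  note sa = setalg5[OF XY XUY x y, folded X1_def Y1_def]
  have cX1: "card X1 = ?e" unfolding X1_def using x y fX cX e1 by (simp add: card_insert_if)
  have cY1: "card Y1 = ?d" unfolding Y1_def using x y fY cY d1 by (simp add: card_insert_if)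
  have QX1: "Q \<subseteq> X1" unfolding X1_def using QX xQ by auto
  have R1: "R {#X1, Y1#} \<noteq> 0"
    using FAM[OF nZ1 nZ2 cP sa(2) QX1 sa(3) cX1] sa(1) by simp
  have ne: "{#X1, Y1#} \<noteq> m0"
  proof
    assume "{#X1, Y1#} = m0"
    then have "(X1 = X0 \<and> Y1 = Y0) \<or> (X1 = Y0 \<and> Y1 = X0)" using m0XY pair_eq by metis
    moreover have "X1 \<noteq> X0" using y unfolding X1_def by auto
    ultimately have X1Y0: "X1 = Y0" by simp
    show False
    proof (cases "?e < ?d")
      case True
      then show False using X1Y0 cX1 cY by simp
    next
      case False
      then have "2 \<le> card (X0 - Y0)" using ncond by simp
      moreover have "X0 - Y0 \<subseteq> {x}" using X1Y0 unfolding X1_def by auto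
      then have "card (X0 - Y0) \<le> 1" using card_mono[of "{x}"] by simp
      ultimately show False by simp
    qed
  qed
  have w: "wmono n {#X1, Y1#} \<le> wmono n m0"
  proof -
    let ?pe = "\<lambda>a. ?e \<le> a \<and> a \<le> n - 1" and ?pd = "\<lambda>a. ?d \<le> a \<and> a \<le> n - 1"
    have w1: "wI n X1 + (if ?pe x then 1 else 0) = wI n X0 + (if ?pe y then 1 else 0)"
    proof -
      have xX: "x \<in> X0" and yX: "y \<notin> X0" using x y by auto
      show ?thesis unfolding wI_def cX1 cX unfolding X1_def using swap_weight[OF fX xX yX, of ?pe] by simp
    qed
    have w2: "wI n Y1 + (if ?pd y then 1 else 0) = wI n Y0 + (if ?pd x then 1 else 0)"
    proof -
      have yY: "y \<in> Y0" and xY: "x \<notin> Y0" using x y by auto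
      show ?thesis unfolding wI_def cY1 cY unfolding Y1_def using swap_weight[OF fY yY xY, of ?pd] by simp
    qed
    have i1: "?pd x \<longrightarrow> ?pe x" using assms(8) by auto
    have i2: "?pe y \<longrightarrow> ?pd y" using wcond by auto
    have "wI n X1 + wI n Y1 \<le> wI n X0 + wI n Y0" using w1 w2 i1 i2 by (auto split: if_splits)
    then show ?thesis unfolding m0XY wmono_pair .
  qed
  have X1n: "X1 \<subseteq> {1..n}" using sa(3) Wn by auto
  have Y1n: "Y1 \<subseteq> {1..n}" using sa(1) Wn by auto
  have gal1: "\<forall>I\<in>#{#X1, Y1#}. gale_le I (?v ` {1..card I})"
    using alwI[OF X1n cX1 e1] alwI[OF Y1n cY1 d1] aX1 aY1 unfolding X1_def Y1_def by simp
  have "quot_v ?v (in_w n R) {#X1, Y1#} \<noteq> 0"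
    unfolding quot_in_w_iff using R1 gal1 w minw by (auto intro: order_trans)
  then show False using uniq ne by blast
qed


end
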